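(* Let $s,t\ge1$ and $D\ge3$ be integers and let $\ell=2\lceil\log s/\log(D-1)\rceil+3$. Let $\mathcal G=\{G_1,\dots,G_t\}$ be an $s$-joined graph family on $n$ vertices. Let $\mathcal H$ be a $[t]$-edge-colored subdivision of $K_D$ in which every path between two branch vertices has length at least $\ell$, and with $\Delta^{mon}(\mathcal H)\le D$. If $|V(\mathcal H)|\le n-6sD$, then $\mathcal G$ contains $\mathcal H$.
   Context: A graph family $\mathcal G=\{G_1,\dots,G_t\}$ is a collection of $t$ simple graphs on a common finite vertex set $V$, $n=|V|$. It is $s$-joined if for all $X\subseteq V\times[t]$ and $Y\subseteq V$ with $|X|\ge s$ and $|Y|\ge s$ there exist $(v,i)\in X$ and $y\in Y$ with $vy\in E(G_i)$. A $[t]$-edge-colored graph $\mathcal H$ is a simple graph each of whose edges is assigned a color in $[t]$; $\deg_{H_i}(h)$ denotes the number of edges of color $i$ at $h$, and $\Delta^{mon}(\mathcal H)=\max_{i\in[t]}\max_{h\in V(\mathcal H)}\deg_{H_i}(h)$. $\mathcal G$ contains $\mathcal H$ if there is an injective map $\phi:V(\mathcal H)\to V$ with $\phi(u)\phi(v)\in E(G_i)$ for every edge $uv$ of color $i$. A subdivision of $K_m$ is obtained from $K_m$ by replacing each edge by a path, these paths internally vertex-disjoint and disjoint from the original vertices except at their ends; the original vertices are the branch vertices. *)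

theory Defs
  imports Complex_Main
begin

definition graph_family :: "'v set \<Rightarrow> nat \<Rightarrow> (nat \<Rightarrow> 'v set set) \<Rightarrow> bool" where
  "graph_family V t E \<longleftrightarrow> finite V \<and>
     (\<forall>i\<in>{1..t}. E i \<subseteq> {e. e \<subseteq> V \<and> card e = 2})"

definition s_joined :: "nat \<Rightarrow> 'v set \<Rightarrow> nat \<Rightarrow> (nat \<Rightarrow> 'v set set) \<Rightarrow> bool" where
  "s_joined s V t E \<longleftrightarrow>
     (\<forall>X Y. X \<subseteq> V \<times> {1..t} \<and> Y \<subseteq> V \<and> card X \<ge> s \<and> card Y \<ge> s \<longrightarrow>
        (\<exists>(v,i)\<in>X. \<exists>y\<in>Y. {v, y} \<in> E i))"

definition edge_colored_graph :: "nat \<Rightarrow> 'h set \<Rightarrow> 'h set set \<Rightarrow> ('h set \<Rightarrow> nat) \<Rightarrow> bool" where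
  "edge_colored_graph t VH EH c \<longleftrightarrow> finite VH \<and>
     EH \<subseteq> {e. e \<subseteq> VH \<and> card e = 2} \<and> (\<forall>e\<in>EH. c e \<in> {1..t})"

definition max_mon_degree_le :: "nat \<Rightarrow> 'h set \<Rightarrow> 'h set set \<Rightarrow> ('h set \<Rightarrow> nat) \<Rightarrow> nat \<Rightarrow> bool" where
  "max_mon_degree_le t VH EH c D \<longleftrightarrow>
     (\<forall>i\<in>{1..t}. \<forall>h\<in>VH. card {e\<in>EH. h \<in> e \<and> c e = i} \<le> D)"

definition path_edges :: "'h list \<Rightarrow> 'h set set" where
  "path_edges xs = {{xs ! k, xs ! Suc k} | k. Suc k < length xs}"

text \<open>(VH, EH) is a subdivision of K_D in which every path between two branch
  vertices has length (number of edges) at least l. B is the set of branch vertices,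
  P a b the path from a to b.\<close>
definition subdivision_KD :: "nat \<Rightarrow> nat \<Rightarrow> 'h set \<Rightarrow> 'h set set \<Rightarrow> bool" where
  "subdivision_KD D l VH EH \<longleftrightarrow>
     (\<exists>B P. B \<subseteq> VH \<and> card B = D \<and>
        (\<forall>a\<in>B. \<forall>b\<in>B. a \<noteq> b \<longrightarrow>
            P b a = rev (P a b) \<and> P a b \<noteq> [] \<and> hd (P a b) = a \<and> last (P a b) = b \<and>
            distinct (P a b) \<and> length (P a b) \<ge> l + 1 \<and>
            (set (P a b) - {a, b}) \<inter> B = {}) \<and>
        (\<forall>a\<in>B. \<forall>b\<in>B. \<forall>a'\<in>B. \<forall>b'\<in>B. a \<noteq> b \<and> a' \<noteq> b' \<and> {a, b} \<noteq> {a', b'} \<longrightarrow>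
            (set (P a b) - {a, b}) \<inter> (set (P a' b') - {a', b'}) = {}) \<and>
        VH = B \<union> (\<Union>a\<in>B. \<Union>b\<in>B - {a}. set (P a b)) \<and>
        EH = (\<Union>a\<in>B. \<Union>b\<in>B - {a}. path_edges (P a b)))"

definition family_contains :: "'v set \<Rightarrow> (nat \<Rightarrow> 'v set set) \<Rightarrow> 'h set \<Rightarrow> 'h set set \<Rightarrow> ('h set \<Rightarrow> nat) \<Rightarrow> bool" where
  "family_contains V E VH EH c \<longleftrightarrow>
     (\<exists>\<phi>. inj_on \<phi> VH \<and> \<phi> ` VH \<subseteq> V \<and> (\<forall>e\<in>EH. \<phi> ` e \<in> E (c e)))"

end

theory Submission
  imports Defs
begin



locale base =
  fixes V :: "'v set" and t :: nat and E :: "nat \<Rightarrow> 'v set set" and s D :: nat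
  assumes finV: "finite V"
    and Esub: "\<forall>i\<in>{1..t}. E i \<subseteq> {e. e \<subseteq> V \<and> card e = 2}"
    and sj: "s_joined s V t E"
    and D3: "D \<ge> 3"
    and s1: "s \<ge> 1"
begin

definition N :: "'v \<Rightarrow> nat \<Rightarrow> 'v set" where
  "N v i = {y. {v, y} \<in> E i}"

definition Gam :: "('v \<times> nat) set \<Rightarrow> 'v set" where
  "Gam U = (\<Union>p\<in>U. N (fst p) (snd p))"

definition PP :: "('v \<times> nat) set" where
  "PP = V \<times> {1..t}"

definition dem :: "'v set \<Rightarrow> ('v \<times> nat \<times> 'v) set \<Rightarrow> 'v \<times> nat \<Rightarrow> int" where
  "dem Fb Ch p = (if fst p \<in> Fb then 0 else int (D - 1) - int (card {y. (fst p, snd p, y) \<in> Ch}))"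

definition ext :: "'v set \<Rightarrow> 'v set \<Rightarrow> ('v \<times> nat \<times> 'v) set \<Rightarrow> bool" where
  "ext Fb Vs Ch \<longleftrightarrow> (\<forall>U. U \<subseteq> PP \<longrightarrow> card U \<le> 2 * s \<longrightarrow>
      (\<Sum>p\<in>U. dem Fb Ch p) \<le> int (card (Gam U - Vs)))"

definition GS :: "'v set \<Rightarrow> 'v set \<Rightarrow> ('v \<times> nat \<times> 'v) set \<Rightarrow> bool" where
  "GS Fb Vs Ch \<longleftrightarrow> Fb \<subseteq> Vs \<and> Vs \<subseteq> V \<and>
     (\<forall>u j y. (u, j, y) \<in> Ch \<longrightarrow> u \<in> Vs \<and> y \<in> Vs \<and> j \<in> {1..t} \<and> {u, y} \<in> E j) \<and>
     (\<forall>u j y u' j'. (u, j, y) \<in> Ch \<longrightarrow> (u', j', y) \<in> Ch \<longrightarrow> u = u' \<and> j = j') \<and>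
     ext Fb Vs Ch"

lemma finPP: "finite PP" using finV by (simp add: PP_def)

lemma edgeV:
  assumes "i \<in> {1..t}" "{v, y} \<in> E i"
  shows "v \<in> V \<and> y \<in> V \<and> v \<noteq> y"
proof -
  have "E i \<subseteq> {e. e \<subseteq> V \<and> card e = 2}" using Esub assms(1) by blast
  with assms(2) have "{v,y} \<subseteq> V" "card {v,y} = 2" by auto
  moreover have "v \<noteq> y"
  proof
    assume "v = y"
    then have "card {v,y} = 1" by simp
    with \<open>card {v,y} = 2\<close> show False by simp
  qed
  ultimately show ?thesis by simp
qed

lemma N_sub: "i \<in> {1..t} \<Longrightarrow> N v i \<subseteq> V"
proof
  fix y assume "i \<in> {1..t}" "y \<in> N v i"
  then show "y \<in> V" using edgeV[of i v y] by (simp add: N_def)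
qed

lemma N_irr: "i \<in> {1..t} \<Longrightarrow> v \<notin> N v i"
  using edgeV[of i v v] unfolding N_def by blast

lemma N_sym: "y \<in> N v i \<longleftrightarrow> v \<in> N y i"
  unfolding N_def by (metis insert_commute mem_Collect_eq)

lemma N_edge: "y \<in> N v i \<longleftrightarrow> {v, y} \<in> E i" by (simp add: N_def)

lemma Gam_sub: "U \<subseteq> PP \<Longrightarrow> Gam U \<subseteq> V"
proof
  fix y assume "U \<subseteq> PP" "y \<in> Gam U"
  then obtain p where "p \<in> U" "y \<in> N (fst p) (snd p)" by (auto simp: Gam_def)
  moreover have "snd p \<in> {1..t}" using \<open>p \<in> U\<close> \<open>U \<subseteq> PP\<close> by (auto simp: PP_def)
  ultimately show "y \<in> V" using N_sub by blast
qed

lemma finGam: "U \<subseteq> PP \<Longrightarrow> finite (Gam U)"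
  by (rule finite_subset[OF Gam_sub finV])

lemma Gam_Un: "Gam (A \<union> B) = Gam A \<union> Gam B" by (auto simp: Gam_def)
lemma Gam_mono: "A \<subseteq> B \<Longrightarrow> Gam A \<subseteq> Gam B" by (auto simp: Gam_def)
lemma Gam_insert: "Gam (insert p A) = N (fst p) (snd p) \<union> Gam A" by (auto simp: Gam_def)

lemma big_gam:
  assumes "U \<subseteq> PP" "card U \<ge> s"
  shows "card (V - Gam U) < s"
proof (rule ccontr)
  assume "\<not> card (V - Gam U) < s"
  then have "card (V - Gam U) \<ge> s" by simp
  moreover have "U \<subseteq> V \<times> {1..t}" using assms(1) by (simp add: PP_def)
  moreover have "V - Gam U \<subseteq> V" by blast
  ultimately have "\<exists>(v,i)\<in>U. \<exists>y\<in>V - Gam U. {v, y} \<in> E i"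
    using sj assms(2) unfolding s_joined_def by blast
  then obtain v i y where "(v,i) \<in> U" "y \<in> V - Gam U" "{v,y} \<in> E i" by blast
  then show False by (force simp: Gam_def N_def)
qed

lemma dem_le: "dem Fb Ch p \<le> int (D - 1)"
  by (simp add: dem_def)

lemma sum_dem_le: "finite U \<Longrightarrow> (\<Sum>p\<in>U. dem Fb Ch p) \<le> int (D - 1) * int (card U)"
proof -
  assume "finite U"
  have "(\<Sum>p\<in>U. dem Fb Ch p) \<le> (\<Sum>p\<in>U. int (D - 1))"
    by (rule sum_mono) (rule dem_le)
  then show ?thesis by (simp add: mult.commute)
qed

lemma GS_tr:
  assumes "GS Fb Vs Ch" "(u,j,y) \<in> Ch"
  shows "u \<in> Vs \<and> y \<in> Vs \<and> j \<in> {1..t} \<and> {u, y} \<in> E j"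
  using assms unfolding GS_def by metis

lemma GS_uniq:
  assumes "GS Fb Vs Ch" "(u,j,y) \<in> Ch" "(u',j',y) \<in> Ch"
  shows "u = u' \<and> j = j'"
  using assms unfolding GS_def by metis

lemma GS_VsV: "GS Fb Vs Ch \<Longrightarrow> Vs \<subseteq> V" unfolding GS_def by metis
lemma GS_FbVs: "GS Fb Vs Ch \<Longrightarrow> Fb \<subseteq> Vs" unfolding GS_def by metis
lemma GS_ext: "GS Fb Vs Ch \<Longrightarrow> ext Fb Vs Ch" unfolding GS_def by metis
lemma GS_finVs: "GS Fb Vs Ch \<Longrightarrow> finite Vs" using GS_VsV finV finite_subset by metis

lemma GS_finch:
  assumes "GS Fb Vs Ch" shows "finite {y. (u,j,y) \<in> Ch}"
proof -
  have "{y. (u,j,y) \<in> Ch} \<subseteq> Vs" using GS_tr[OF assms] by blast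
  then show ?thesis using GS_finVs[OF assms] finite_subset by metis
qed

lemma GS_finCh:
  assumes "GS Fb Vs Ch" shows "finite Ch"
proof -
  have "Ch \<subseteq> Vs \<times> {1..t} \<times> Vs" using assms unfolding GS_def by auto
  moreover have "finite Vs" using assms finV finite_subset unfolding GS_def by metis
  ultimately show ?thesis by (meson finite_SigmaI finite_atLeastAtMost finite_subset)
qed

end




context base begin

definition fval :: "'v set \<Rightarrow> ('v \<times> nat \<times> 'v) set \<Rightarrow> 'v set \<Rightarrow> ('v \<times> nat) set \<Rightarrow> int" where
  "fval Fb Ch Vs U = int (card (Gam U - Vs)) - (\<Sum>p\<in>U. dem Fb Ch p)"

lemma finPPsub: "U \<subseteq> PP \<Longrightarrow> finite U"
  by (rule finite_subset[OF _ finPP])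

lemma submod:
  assumes "A \<subseteq> PP" "B \<subseteq> PP"
  shows "fval Fb Ch Vs (A \<union> B) + fval Fb Ch Vs (A \<inter> B) \<le> fval Fb Ch Vs A + fval Fb Ch Vs B"
proof -
  have fA: "finite A" "finite B" using assms finPPsub by auto
  have g1: "Gam (A \<union> B) - Vs = (Gam A - Vs) \<union> (Gam B - Vs)" by (auto simp: Gam_Un)
  have g2: "Gam (A \<inter> B) - Vs \<subseteq> (Gam A - Vs) \<inter> (Gam B - Vs)"
    using Gam_mono[of "A \<inter> B" A] Gam_mono[of "A \<inter> B" B] by blast
  have fin: "finite (Gam A - Vs)" "finite (Gam B - Vs)" using finGam assms by auto
  have c1: "card (Gam A - Vs) + card (Gam B - Vs) = card ((Gam A - Vs) \<union> (Gam B - Vs)) + card ((Gam A - Vs) \<inter> (Gam B - Vs))"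
    by (rule card_Un_Int[OF fin])
  have c2: "card (Gam (A \<inter> B) - Vs) \<le> card ((Gam A - Vs) \<inter> (Gam B - Vs))"
    by (rule card_mono[OF _ g2]) (use fin in blast)
  have s: "(\<Sum>p\<in>A \<union> B. dem Fb Ch p) + (\<Sum>p\<in>A \<inter> B. dem Fb Ch p) = (\<Sum>p\<in>A. dem Fb Ch p) + (\<Sum>p\<in>B. dem Fb Ch p)"
    by (rule sum.union_inter[OF fA])
  show ?thesis unfolding fval_def g1 using c1 c2 s by linarith
qed

lemma add_leaf:
  assumes gs: "GS Fb Vs Ch" and v: "v \<in> Vs" and i: "i \<in> {1..t}" and dv: "dem Fb Ch (v,i) \<ge> 1"
    and sz: "card Vs + (2*D - 1)*s \<le> card V"
  shows "\<exists>y. y \<in> N v i \<and> y \<notin> Vs \<and> GS Fb (insert y Vs) (insert (v,i,y) Ch)"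
proof -
  let ?f = "fval Fb Ch Vs"
  have ext: "ext Fb Vs Ch" and VsV: "Vs \<subseteq> V" using gs by (auto simp: GS_def)
  have finVs: "finite Vs" using VsV finV finite_subset by metis
  define crit where "crit U \<longleftrightarrow> U \<subseteq> PP \<and> card U \<le> 2*s \<and> ?f U \<le> 0 \<and> (v,i) \<notin> U" for U
  have f_nonneg: "?f U \<ge> 0" if "U \<subseteq> PP" "card U \<le> 2*s" for U
    using ext that by (simp add: ext_def fval_def)
  have small: "card U < s" if c: "crit U" for U
  proof (rule ccontr)
    assume "\<not> card U < s"
    hence U: "U \<subseteq> PP" "card U \<ge> s" "card U \<le> 2*s" "?f U \<le> 0" using c by (auto simp: crit_def)
    have fU: "finite U" using U(1) finPPsub by blast
    have cg: "card (V - Gam U) < s" by (rule big_gam[OF U(1) U(2)])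
    have "V \<subseteq> (V - Gam U) \<union> Vs \<union> (Gam U - Vs)" by blast
    hence "card V \<le> card ((V - Gam U) \<union> Vs \<union> (Gam U - Vs))"
      by (rule card_mono[rotated]) (use finV finVs finGam[OF U(1)] in auto)
    also have "\<dots> \<le> card (V - Gam U) + card Vs + card (Gam U - Vs)"
      by (metis (no_types, lifting) add_le_mono card_Un_le dual_order.trans le_refl)
    finally have cV: "card V \<le> card (V - Gam U) + card Vs + card (Gam U - Vs)" .
    have sd: "(\<Sum>p\<in>U. dem Fb Ch p) \<le> int (D - 1) * int (card U)" by (rule sum_dem_le[OF fU])
    have m: "int (D - 1) * int (card U) \<le> int (D - 1) * int (2*s)"
      by (rule mult_left_mono) (use U in auto)
    have "2*D - 1 = 2*(D - 1) + 1" using D3 by linarith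
    hence e: "(2*D - 1)*s = (D - 1)*(2*s) + s" by (simp add: algebra_simps)
    have e2: "int ((D - 1)*(2*s)) = int (D - 1) * int (2*s)" by simp
    from U(4) have "int (card (Gam U - Vs)) \<le> (\<Sum>p\<in>U. dem Fb Ch p)" by (simp add: fval_def)
    with sd m cV cg sz e e2 show False by linarith
  qed
  have crit_empty: "crit {}" by (simp add: crit_def fval_def Gam_def)
  have union: "crit (A \<union> B)" if a: "crit A" "crit B" for A B
  proof -
    have A: "A \<subseteq> PP" "B \<subseteq> PP" "?f A \<le> 0" "?f B \<le> 0" using a by (auto simp: crit_def)
    have "card (A \<union> B) \<le> card A + card B" by (rule card_Un_le)
    hence cu: "card (A \<union> B) \<le> 2*s" using small[OF a(1)] small[OF a(2)] by linarith
    have ci: "card (A \<inter> B) \<le> 2*s" using card_mono[of A "A \<inter> B"] finPPsub[OF A(1)] small[OF a(1)] by auto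
    have "?f (A \<union> B) + ?f (A \<inter> B) \<le> ?f A + ?f B" by (rule submod[OF A(1) A(2)])
    moreover have "?f (A \<inter> B) \<ge> 0" using f_nonneg[OF _ ci] A by blast
    ultimately have "?f (A \<union> B) \<le> 0" using A by linarith
    then show ?thesis using a cu A by (auto simp: crit_def)
  qed
  have fam: "finite F \<Longrightarrow> (\<forall>U\<in>F. crit U) \<Longrightarrow> crit (\<Union>F)" for F
    by (induction rule: finite_induct) (auto simp: crit_empty union)
  define Z where "Z = \<Union>{U. crit U}"
  have "{U. crit U} \<subseteq> Pow PP" by (auto simp: crit_def)
  hence "finite {U. crit U}" using finPP by (meson finite_Pow_iff finite_subset)
  hence cZ: "crit Z" unfolding Z_def by (rule fam) simp
  hence Z: "Z \<subseteq> PP" "(v,i) \<notin> Z" "?f Z \<le> 0" "card Z < s" using small by (auto simp: crit_def)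
  have fZ: "finite Z" using Z(1) finPPsub by blast
  have vV: "v \<in> V" using v VsV by blast
  have insP: "insert (v,i) Z \<subseteq> PP" using Z(1) vV i by (auto simp: PP_def)
  have "card (insert (v,i) Z) = card Z + 1" using fZ Z(2) by simp
  hence cins: "card (insert (v,i) Z) \<le> 2*s" using Z(4) by linarith
  have "(\<Sum>p\<in>insert (v,i) Z. dem Fb Ch p) \<le> int (card (Gam (insert (v,i) Z) - Vs))"
    using ext insP cins by (simp add: ext_def)
  moreover have "(\<Sum>p\<in>insert (v,i) Z. dem Fb Ch p) = dem Fb Ch (v,i) + (\<Sum>p\<in>Z. dem Fb Ch p)"
    using fZ Z(2) by simp
  moreover have "int (card (Gam Z - Vs)) \<le> (\<Sum>p\<in>Z. dem Fb Ch p)" using Z(3) by (simp add: fval_def)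
  ultimately have lt: "card (Gam Z - Vs) < card (Gam (insert (v,i) Z) - Vs)" using dv by linarith
  have "\<not> (Gam (insert (v,i) Z) - Vs \<subseteq> Gam Z - Vs)"
  proof
    assume "Gam (insert (v,i) Z) - Vs \<subseteq> Gam Z - Vs"
    hence "card (Gam (insert (v,i) Z) - Vs) \<le> card (Gam Z - Vs)"
      by (rule card_mono[rotated]) (use finGam[OF Z(1)] in blast)
    with lt show False by linarith
  qed
  then obtain y where y: "y \<in> N v i" "y \<notin> Vs" "y \<notin> Gam Z" by (auto simp: Gam_insert)
  have yV: "y \<in> V" using y(1) N_sub[OF i] by blast
  have vFb: "v \<notin> Fb" using dv by (auto simp: dem_def)
  let ?Ch = "insert (v,i,y) Ch" and ?Vs = "insert y Vs"
  have chV: "\<forall>u j y. (u, j, y) \<in> Ch \<longrightarrow> u \<in> Vs \<and> y \<in> Vs \<and> j \<in> {1..t} \<and> {u, y} \<in> E j"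
    and uniq: "\<forall>u j y u' j'. (u, j, y) \<in> Ch \<longrightarrow> (u', j', y) \<in> Ch \<longrightarrow> u = u' \<and> j = j'"
    and FbVs: "Fb \<subseteq> Vs" using gs by (auto simp: GS_def)
  have finCh: "finite Ch" by (rule GS_finCh[OF gs])
  have dem_new: "dem Fb ?Ch p = dem Fb Ch p - (if p = (v,i) then 1 else 0)" for p
  proof (cases "p = (v,i)")
    case True
    have "{y'. (v, i, y') \<in> ?Ch} = insert y {y'. (v, i, y') \<in> Ch}" by auto
    moreover have "y \<notin> {y'. (v, i, y') \<in> Ch}" using chV y(2) by blast
    moreover have "finite {y'. (v, i, y') \<in> Ch}"
    proof -
      have "{y'. (v, i, y') \<in> Ch} \<subseteq> Vs" using chV by blast
      then show ?thesis using finVs finite_subset by metis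
    qed
    ultimately have "card {y'. (v, i, y') \<in> ?Ch} = card {y'. (v, i, y') \<in> Ch} + 1" by simp
    then show ?thesis using True vFb by (simp add: dem_def)
  next
    case False
    have "{y'. (fst p, snd p, y') \<in> ?Ch} = {y'. (fst p, snd p, y') \<in> Ch}"
      using False by (cases p) auto
    then show ?thesis using False by (simp add: dem_def)
  qed
  have G4: "ext Fb ?Vs ?Ch"
    unfolding ext_def
  proof (intro allI impI)
    fix U assume U: "U \<subseteq> PP" "card U \<le> 2*s"
    have fU: "finite U" using U(1) finPPsub by blast
    have s1: "(\<Sum>p\<in>U. dem Fb ?Ch p) = (\<Sum>p\<in>U. dem Fb Ch p) - (if (v,i) \<in> U then 1 else 0)"
    proof -
      have "(\<Sum>p\<in>U. dem Fb ?Ch p) = (\<Sum>p\<in>U. dem Fb Ch p - (if p = (v,i) then 1 else 0))"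
        by (rule sum.cong) (auto simp: dem_new)
      also have "\<dots> = (\<Sum>p\<in>U. dem Fb Ch p) - (\<Sum>p\<in>U. (if p = (v,i) then 1 else 0))"
        by (rule sum_subtractf)
      also have "(\<Sum>p\<in>U. (if p = (v,i) then 1 else 0::int)) = (if (v,i) \<in> U then 1 else 0)"
        using fU by (simp add: sum.delta)
      finally show ?thesis .
    qed
    have eqG: "Gam U - ?Vs = (Gam U - Vs) - {y}" by blast
    have fin1: "finite (Gam U - Vs)" using finGam[OF U(1)] by blast
    have c1: "int (card (Gam U - ?Vs)) = int (card (Gam U - Vs)) - (if y \<in> Gam U then 1 else 0)"
    proof (cases "y \<in> Gam U")
      case True
      hence "y \<in> Gam U - Vs" using y(2) by blast
      hence "card (Gam U - Vs) = Suc (card (Gam U - Vs - {y}))" using fin1 card.remove by metis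
      then show ?thesis using eqG True by simp
    next
      case False
      hence "Gam U - Vs - {y} = Gam U - Vs" by blast
      then show ?thesis using eqG False by simp
    qed
    have f0: "?f U \<ge> 0" by (rule f_nonneg[OF U])
    show "(\<Sum>p\<in>U. dem Fb ?Ch p) \<le> int (card (Gam U - ?Vs))"
    proof (cases "?f U \<ge> 1 \<or> (v,i) \<in> U")
      case True
      then show ?thesis using s1 c1 f0 by (auto simp: fval_def split: if_splits)
    next
      case False
      hence "crit U" using U f0 by (auto simp: crit_def)
      hence "U \<subseteq> Z" unfolding Z_def by blast
      hence "y \<notin> Gam U" using Gam_mono y(3) by blast
      then show ?thesis using s1 c1 f0 False by (auto simp: fval_def)
    qed
  qed
  have G1: "Fb \<subseteq> ?Vs" and G2: "?Vs \<subseteq> V" using FbVs VsV yV by auto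
  have G3: "\<forall>u j y'. (u, j, y') \<in> ?Ch \<longrightarrow> u \<in> ?Vs \<and> y' \<in> ?Vs \<and> j \<in> {1..t} \<and> {u, y'} \<in> E j"
    using chV v i y(1) by (auto simp: N_def)
  have G5: "\<forall>u j y' u' j'. (u, j, y') \<in> ?Ch \<longrightarrow> (u', j', y') \<in> ?Ch \<longrightarrow> u = u' \<and> j = j'"
  proof (intro allI impI)
    fix u j y' u' j' assume a: "(u,j,y') \<in> ?Ch" "(u',j',y') \<in> ?Ch"
    show "u = u' \<and> j = j'"
    proof (cases "y' = y")
      case True
      have "(u,j,y') \<notin> Ch" "(u',j',y') \<notin> Ch" using chV y(2) True by metis+
      then show ?thesis using a by simp
    next
      case False
      then have "(u,j,y') \<in> Ch" "(u',j',y') \<in> Ch" using a by auto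
      then show ?thesis using uniq by metis
    qed
  qed
  have "GS Fb ?Vs ?Ch" unfolding GS_def using G1 G2 G3 G4 G5 by (intro conjI)
  then show ?thesis using y by blast
qed

end



lemma cardle: "finite A \<Longrightarrow> finite B \<Longrightarrow> card A \<le> card (A - B) + card B"
proof -
  assume f: "finite A" "finite B"
  have "A \<subseteq> (A - B) \<union> B" by blast
  hence "card A \<le> card ((A - B) \<union> B)" by (rule card_mono[rotated]) (use f in auto)
  also have "\<dots> \<le> card (A - B) + card B" by (rule card_Un_le)
  finally show ?thesis .
qed

context base begin

lemma remove_set:
  assumes gs: "GS Fb Vs Ch" and R: "R \<subseteq> Vs" "R \<inter> Fb = {}"
    and down: "\<forall>u j y. (u,j,y) \<in> Ch \<longrightarrow> u \<in> R \<longrightarrow> y \<in> R"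
  shows "GS Fb (Vs - R) {(u,j,y). (u,j,y) \<in> Ch \<and> y \<notin> R}"
proof -
  let ?Ch = "{(u,j,y). (u,j,y) \<in> Ch \<and> y \<notin> R}"
  have ext: "ext Fb Vs Ch" and VsV: "Vs \<subseteq> V" and FbVs: "Fb \<subseteq> Vs" using gs by (auto simp: GS_def)
  have chV: "\<forall>u j y. (u, j, y) \<in> Ch \<longrightarrow> u \<in> Vs \<and> y \<in> Vs \<and> j \<in> {1..t} \<and> {u, y} \<in> E j"
    and uniq: "\<forall>u j y u' j'. (u, j, y) \<in> Ch \<longrightarrow> (u', j', y) \<in> Ch \<longrightarrow> u = u' \<and> j = j'"
    using gs by (auto simp: GS_def)
  have finVs: "finite Vs" using VsV finV finite_subset by metis
  define C where "C p = {y \<in> R. (fst p, snd p, y) \<in> Ch}" for p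
  have finC: "finite (C p)" for p
  proof -
    have "C p \<subseteq> Vs" using R(1) by (auto simp: C_def)
    then show ?thesis using finVs finite_subset by metis
  qed
  have dem_new: "dem Fb ?Ch p \<le> dem Fb Ch p + int (card (C p))" for p
  proof (cases "fst p \<in> Fb")
    case True then show ?thesis by (simp add: dem_def)
  next
    case False
    have eq: "{y. (fst p, snd p, y) \<in> Ch} = {y. (fst p, snd p, y) \<in> ?Ch} \<union> C p" by (auto simp: C_def)
    have fin2: "finite {y. (fst p, snd p, y) \<in> ?Ch}"
      by (rule finite_subset[OF _ GS_finch[OF gs, of "fst p" "snd p"]]) auto
    have "card {y. (fst p, snd p, y) \<in> Ch} = card {y. (fst p, snd p, y) \<in> ?Ch} + card (C p)"
      unfolding eq by (rule card_Un_disjoint[OF fin2 finC]) (auto simp: C_def)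
    then show ?thesis using False by (simp add: dem_def)
  qed
  have G4: "ext Fb (Vs - R) ?Ch"
    unfolding ext_def
  proof (intro allI impI)
    fix U assume U: "U \<subseteq> PP" "card U \<le> 2*s"
    have fU: "finite U" using U(1) finPPsub by blast
    have e1: "(\<Sum>p\<in>U. dem Fb Ch p) \<le> int (card (Gam U - Vs))" using ext U by (simp add: ext_def)
    have "(\<Sum>p\<in>U. dem Fb ?Ch p) \<le> (\<Sum>p\<in>U. dem Fb Ch p + int (card (C p)))"
      by (rule sum_mono) (rule dem_new)
    also have "\<dots> = (\<Sum>p\<in>U. dem Fb Ch p) + int (\<Sum>p\<in>U. card (C p))"
      by (simp add: sum.distrib)
    also have "(\<Sum>p\<in>U. card (C p)) = card (\<Union>p\<in>U. C p)"
    proof (rule card_UN_disjoint[symmetric, OF fU])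
      show "\<forall>i\<in>U. finite (C i)" using finC by blast
      show "\<forall>i\<in>U. \<forall>j\<in>U. i \<noteq> j \<longrightarrow> C i \<inter> C j = {}"
      proof (intro ballI impI)
        fix p q assume "p \<in> U" "q \<in> U" "p \<noteq> q"
        show "C p \<inter> C q = {}"
        proof (rule ccontr)
          assume "C p \<inter> C q \<noteq> {}"
          then obtain y where "(fst p, snd p, y) \<in> Ch" "(fst q, snd q, y) \<in> Ch" by (auto simp: C_def)
          then have "fst p = fst q \<and> snd p = snd q" using uniq by metis
          with \<open>p \<noteq> q\<close> show False by (simp add: prod_eq_iff)
        qed
      qed
    qed
    also have "card (\<Union>p\<in>U. C p) \<le> card (Gam U \<inter> R)"
    proof (rule card_mono)
      show "finite (Gam U \<inter> R)" using finGam[OF U(1)] by blast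
      show "(\<Union>p\<in>U. C p) \<subseteq> Gam U \<inter> R"
      proof
        fix y assume "y \<in> (\<Union>p\<in>U. C p)"
        then obtain p where p: "p \<in> U" "y \<in> R" "(fst p, snd p, y) \<in> Ch" by (auto simp: C_def)
        then have "{fst p, y} \<in> E (snd p)" using GS_tr[OF gs] by blast
        then have "y \<in> N (fst p) (snd p)" by (simp add: N_def)
        then show "y \<in> Gam U \<inter> R" using p by (auto simp: Gam_def)
      qed
    qed
    finally have a: "(\<Sum>p\<in>U. dem Fb ?Ch p) \<le> (\<Sum>p\<in>U. dem Fb Ch p) + int (card (Gam U \<inter> R))"
      by simp
    have "Gam U - (Vs - R) = (Gam U - Vs) \<union> (Gam U \<inter> R)" using R(1) by blast
    moreover have "card ((Gam U - Vs) \<union> (Gam U \<inter> R)) = card (Gam U - Vs) + card (Gam U \<inter> R)"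
      by (rule card_Un_disjoint) (use finGam[OF U(1)] R(1) in auto)
    ultimately have b: "card (Gam U - (Vs - R)) = card (Gam U - Vs) + card (Gam U \<inter> R)" by simp
    show "(\<Sum>p\<in>U. dem Fb ?Ch p) \<le> int (card (Gam U - (Vs - R)))"
      using a b e1 by linarith
  qed
  have G1: "Fb \<subseteq> Vs - R" using FbVs R(2) by blast
  have G2: "Vs - R \<subseteq> V" using VsV by blast
  have G3: "\<forall>u j y. (u, j, y) \<in> ?Ch \<longrightarrow> u \<in> Vs - R \<and> y \<in> Vs - R \<and> j \<in> {1..t} \<and> {u, y} \<in> E j"
  proof (intro allI impI)
    fix u j y assume "(u, j, y) \<in> ?Ch"
    then have a: "(u,j,y) \<in> Ch" "y \<notin> R" by auto
    then have "u \<notin> R" using down by metis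
    then show "u \<in> Vs - R \<and> y \<in> Vs - R \<and> j \<in> {1..t} \<and> {u, y} \<in> E j" using a GS_tr[OF gs a(1)] by blast
  qed
  have G5: "\<forall>u j y u' j'. (u, j, y) \<in> ?Ch \<longrightarrow> (u', j', y) \<in> ?Ch \<longrightarrow> u = u' \<and> j = j'"
    using GS_uniq[OF gs] by blast
  show ?thesis unfolding GS_def using G1 G2 G3 G4 G5 by (intro conjI)
qed

lemma initial:
  assumes big: "card V \<ge> (4*D+1)*s + D"
  shows "\<exists>Fb. Fb \<subseteq> V \<and> card Fb < s \<and> (\<forall>A. A \<subseteq> V - Fb \<longrightarrow> card A \<le> D \<longrightarrow> GS Fb (Fb \<union> A) {})"
proof -
  define K where "K = 2*D - 1"
  define bad where "bad W \<longleftrightarrow> W \<subseteq> PP \<and> card W < s \<and> card (Gam W - fst ` W) \<le> K * card W" for W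
  define Fam where "Fam = {W. bad W}"
  have "Fam \<subseteq> Pow PP" by (auto simp: Fam_def bad_def)
  hence finFam: "finite Fam" using finPP by (meson finite_Pow_iff finite_subset)
  have "{} \<in> Fam" using s1 by (simp add: Fam_def bad_def Gam_def)
  hence ne: "Fam \<noteq> {}" by blast
  define m where "m = Max (card ` Fam)"
  have "m \<in> card ` Fam" unfolding m_def using finFam ne by simp
  then obtain Z where Z: "Z \<in> Fam" "card Z = m" by blast
  have maxZ: "card W \<le> card Z" if "bad W" for W
    using that Z(2) finFam by (auto simp: m_def Fam_def intro: Max_ge)
  have bZ: "bad Z" using Z(1) by (simp add: Fam_def)
  hence ZP: "Z \<subseteq> PP" and cZ: "card Z < s" and gZ: "card (Gam Z - fst ` Z) \<le> K * card Z"
    by (auto simp: bad_def)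
  have fZ: "finite Z" using ZP finPPsub by blast
  define Fb where "Fb = fst ` Z"
  have FbV: "Fb \<subseteq> V" using ZP by (auto simp: Fb_def PP_def)
  have cFb: "card Fb < s" using card_image_le[OF fZ, of fst] cZ by (simp add: Fb_def)
  have finFb: "finite Fb" using fZ by (simp add: Fb_def)
  have key: "card (Gam U - Fb) > K * card U"
    if U: "U \<subseteq> (V - Fb) \<times> {1..t}" "U \<noteq> {}" "card U < s" for U
  proof (rule ccontr)
    assume "\<not> card (Gam U - Fb) > K * card U"
    hence gU: "card (Gam U - Fb) \<le> K * card U" by simp
    have UP: "U \<subseteq> PP" using U(1) by (auto simp: PP_def)
    have fU: "finite U" using UP finPPsub by blast
    define W where "W = Z \<union> U"
    have WP: "W \<subseteq> PP" using UP ZP by (simp add: W_def)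
    have disj: "Z \<inter> U = {}" using U(1) by (force simp: Fb_def)
    have cW: "card W = card Z + card U" unfolding W_def by (rule card_Un_disjoint[OF fZ fU disj])
    have cUpos: "card U > 0" using U(2) fU by auto
    have "Gam W - fst ` W \<subseteq> (Gam Z - fst ` Z) \<union> (Gam U - Fb)"
      by (auto simp: W_def Gam_Un Fb_def)
    hence "card (Gam W - fst ` W) \<le> card ((Gam Z - fst ` Z) \<union> (Gam U - Fb))"
      by (rule card_mono[rotated]) (use finGam[OF ZP] finGam[OF UP] in auto)
    also have "\<dots> \<le> card (Gam Z - fst ` Z) + card (Gam U - Fb)" by (rule card_Un_le)
    finally have gW: "card (Gam W - fst ` W) \<le> K * card W" using gZ gU cW by (simp add: algebra_simps)
    show False
    proof (cases "card W < s")
      case True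
      hence "bad W" using WP gW by (simp add: bad_def)
      hence "card W \<le> card Z" by (rule maxZ)
      with cW cUpos show False by linarith
    next
      case False
      hence sW: "card W \<ge> s" by simp
      have cWs: "card W < 2*s" using cW cZ U(3) by linarith
      have cg: "card (V - Gam W) < s" by (rule big_gam[OF WP sW])
      have finfW: "finite (fst ` W)" using WP finPPsub by blast
      have cfW: "card (fst ` W) \<le> card W" using WP finPPsub card_image_le by blast
      have c1: "card V \<le> card (V - fst ` W) + card (fst ` W)" by (rule cardle[OF finV finfW])
      have c2: "card (V - fst ` W) \<le> card (V - fst ` W - (V - Gam W)) + card (V - Gam W)"
        by (rule cardle) (use finV in auto)
      have "V - fst ` W - (V - Gam W) \<subseteq> Gam W - fst ` W" by blast
      hence c3: "card (V - fst ` W - (V - Gam W)) \<le> card (Gam W - fst ` W)"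
        by (rule card_mono[rotated]) (use finGam[OF WP] in auto)
      have m1: "K * card W \<le> K * (2*s)" using cWs by simp
      obtain D' where D': "D = D' + 1" using D3 by (intro that[of "D - 1"]) simp
      have e: "K * (2*s) + 3*s \<le> (4*D+1)*s" unfolding K_def D' by (simp add: algebra_simps)
      show False using c1 c2 c3 gW m1 e big cg cfW cWs by linarith
    qed
  qed
  have "\<forall>A. A \<subseteq> V - Fb \<longrightarrow> card A \<le> D \<longrightarrow> GS Fb (Fb \<union> A) {}"
  proof (intro allI impI)
    fix A assume A: "A \<subseteq> V - Fb" "card A \<le> D"
    have finA: "finite A" using A(1) finV finite_subset by blast
    have G4: "ext Fb (Fb \<union> A) {}"
      unfolding ext_def
    proof (intro allI impI)
      fix U assume U: "U \<subseteq> PP" "card U \<le> 2*s"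
      have fU: "finite U" using U(1) finPPsub by blast
      define U' where "U' = {p \<in> U. fst p \<notin> Fb}"
      have fU': "finite U'" using fU by (simp add: U'_def)
      have U'sub: "U' \<subseteq> (V - Fb) \<times> {1..t}" using U(1) by (auto simp: U'_def PP_def)
      have U'P: "U' \<subseteq> PP" using U'sub by (auto simp: PP_def)
      have cU': "card U' \<le> 2*s" using card_mono[OF fU, of U'] U(2) by (auto simp: U'_def)
      have sdem: "(\<Sum>p\<in>U. dem Fb {} p) = int (D - 1) * int (card U')"
      proof -
        have "(\<Sum>p\<in>U. dem Fb {} p) = (\<Sum>p\<in>U. if fst p \<notin> Fb then int (D - 1) else 0)"
          by (rule sum.cong) (auto simp: dem_def)
        also have "\<dots> = (\<Sum>p\<in>U'. int (D - 1))"
          unfolding U'_def by (rule sum.inter_filter[symmetric, OF fU])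
        finally show ?thesis by simp
      qed
      have finX: "finite (Fb \<union> A)" using finFb finA by blast
      have cX: "card (Fb \<union> A) \<le> card Fb + card A" by (rule card_Un_le)
      have mono: "card (Gam U' - (Fb \<union> A)) \<le> card (Gam U - (Fb \<union> A))"
        by (rule card_mono) (use finGam[OF U(1)] Gam_mono[of U' U] in \<open>auto simp: U'_def\<close>)
      show "(\<Sum>p\<in>U. dem Fb {} p) \<le> int (card (Gam U - (Fb \<union> A)))"
      proof (cases "U' = {}")
        case True then show ?thesis using sdem by simp
      next
        case ne: False
        show ?thesis
        proof (cases "card U' < s")
          case True
          have k: "card (Gam U' - Fb) > K * card U'" by (rule key[OF U'sub ne True])
          have c1: "card (Gam U' - Fb) \<le> card (Gam U' - Fb - A) + card A"
            by (rule cardle) (use finGam[OF U'P] finA in auto)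
          have "Gam U' - Fb - A = Gam U' - (Fb \<union> A)" by blast
          with c1 have c1': "card (Gam U' - Fb) \<le> card (Gam U' - (Fb \<union> A)) + card A" by simp
          have pos: "card U' \<ge> 1" using ne fU' by (simp add: Suc_le_eq card_gt_0_iff)
          have e: "K * card U' \<ge> (D - 1) * card U' + D"
          proof -
            obtain D' where D': "D = D' + 1" using D3 by (intro that[of "D - 1"]) simp
            have "K * card U' = (D - 1) * card U' + D * card U'" unfolding K_def D'
              by (simp add: algebra_simps)
            moreover have "D * card U' \<ge> D" using pos by simp
            ultimately show ?thesis by linarith
          qed
          have "int (D - 1) * int (card U') = int ((D - 1) * card U')" by simp
          then show ?thesis using sdem k c1' e mono A(2) by linarith
        next
          case False
          hence sU: "card U' \<ge> s" by simp
          have cg: "card (V - Gam U') < s" by (rule big_gam[OF U'P sU])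
          have c1: "card V \<le> card (V - (Fb \<union> A)) + card (Fb \<union> A)" by (rule cardle[OF finV finX])
          have c2: "card (V - (Fb \<union> A)) \<le> card (V - (Fb \<union> A) - (V - Gam U')) + card (V - Gam U')"
            by (rule cardle) (use finV in auto)
          have "V - (Fb \<union> A) - (V - Gam U') \<subseteq> Gam U' - (Fb \<union> A)" by blast
          hence c3: "card (V - (Fb \<union> A) - (V - Gam U')) \<le> card (Gam U' - (Fb \<union> A))"
            by (rule card_mono[rotated]) (use finGam[OF U'P] in auto)
          have m1: "(D - 1) * card U' \<le> (D - 1) * (2*s)" using cU' by simp
          obtain D' where D': "D = D' + 1" using D3 by (intro that[of "D - 1"]) simp
          have e: "(D - 1) * (2*s) + 2*s + D \<le> (4*D+1)*s + D" unfolding D' by (simp add: algebra_simps)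
          have "int (D - 1) * int (card U') = int ((D - 1) * card U')" by simp
          then show ?thesis using sdem c1 c2 c3 cg mono m1 e big cX cFb A(2) by linarith
        qed
      qed
    qed
    have G1: "Fb \<subseteq> Fb \<union> A" by blast
    have G2: "Fb \<union> A \<subseteq> V" using FbV A(1) by blast
    show "GS Fb (Fb \<union> A) {}" unfolding GS_def using G1 G2 G4 by simp
  qed
  then show ?thesis using FbV cFb by blast
qed

end



lemma trip_cons:
  "{((v#y#ys)!k, (c#cs)!k, (y#ys)!k) | k. k < Suc n} = insert (v,c,y) {((y#ys)!k, cs!k, ys!k) | k. k < n}"
proof
  show "{((v#y#ys)!k, (c#cs)!k, (y#ys)!k) | k. k < Suc n} \<subseteq> insert (v,c,y) {((y#ys)!k, cs!k, ys!k) | k. k < n}"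
  proof
    fix x assume "x \<in> {((v#y#ys)!k, (c#cs)!k, (y#ys)!k) | k. k < Suc n}"
    then obtain k where k: "x = ((v#y#ys)!k, (c#cs)!k, (y#ys)!k)" "k < Suc n" by blast
    show "x \<in> insert (v,c,y) {((y#ys)!k, cs!k, ys!k) | k. k < n}"
    proof (cases k)
      case 0 then show ?thesis using k by simp
    next
      case (Suc k') then show ?thesis using k by auto
    qed
  qed
next
  show "insert (v,c,y) {((y#ys)!k, cs!k, ys!k) | k. k < n} \<subseteq> {((v#y#ys)!k, (c#cs)!k, (y#ys)!k) | k. k < Suc n}"
  proof
    fix x assume "x \<in> insert (v,c,y) {((y#ys)!k, cs!k, ys!k) | k. k < n}"
    then consider "x = (v,c,y)" | k where "x = ((y#ys)!k, cs!k, ys!k)" "k < n" by blast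
    then show "x \<in> {((v#y#ys)!k, (c#cs)!k, (y#ys)!k) | k. k < Suc n}"
    proof cases
      case 1 then show ?thesis by (intro CollectI exI[of _ 0]) simp
    next
      case 2 then show ?thesis by (intro CollectI exI[of _ "Suc k"]) simp
    qed
  qed
qed

context base begin

lemma dem_fresh:
  assumes gs: "GS Fb Vs Ch" and y: "y \<notin> Vs"
  shows "dem Fb Ch (y, j) = int (D - 1)"
proof -
  have "y \<notin> Fb" using GS_FbVs[OF gs] y by blast
  moreover have "{z. (y, j, z) \<in> Ch} = {}" using GS_tr[OF gs] y by blast
  ultimately show ?thesis by (simp add: dem_def)
qed

lemma grow_path:
  assumes "GS Fb Vs Ch" "v \<in> Vs" "set cs \<subseteq> {1..t}" "cs \<noteq> []" "dem Fb Ch (v, hd cs) \<ge> 1"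
    "card Vs + length cs + (2*D-1)*s \<le> card V"
  shows "\<exists>ys. length ys = length cs \<and> distinct ys \<and> set ys \<inter> Vs = {} \<and>
     GS Fb (Vs \<union> set ys) (Ch \<union> {((v#ys)!k, cs!k, ys!k) | k. k < length cs})"
  using assms
proof (induction cs arbitrary: v Vs Ch)
  case Nil then show ?case by simp
next
  case (Cons c cs')
  have c: "c \<in> {1..t}" using Cons.prems(3) by simp
  have b0: "card Vs + (2*D-1)*s \<le> card V" using Cons.prems(6) by simp
  obtain y where y: "y \<in> N v c" "y \<notin> Vs" and gs1: "GS Fb (insert y Vs) (insert (v,c,y) Ch)"
    using add_leaf[OF Cons.prems(1) Cons.prems(2) c _ b0] Cons.prems(5) by auto
  show ?case
  proof (cases "cs' = []")
    case True
    have "{((v#[y])!k, (c#cs')!k, [y]!k) | k. k < length (c#cs')} = {(v,c,y)}" using True by auto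
    then show ?thesis using gs1 y True by (intro exI[of _ "[y]"]) auto
  next
    case False
    have finVs: "finite Vs" using GS_finVs[OF Cons.prems(1)] .
    have d1: "dem Fb (insert (v,c,y) Ch) (y, hd cs') \<ge> 1"
    proof -
      have "y \<notin> Fb" using GS_FbVs[OF Cons.prems(1)] y(2) by blast
      moreover have "{z. (y, hd cs', z) \<in> insert (v,c,y) Ch} = {}"
        using GS_tr[OF Cons.prems(1)] y(2) Cons.prems(2) by auto
      moreover have "y \<noteq> v" using y(2) Cons.prems(2) by blast
      ultimately show ?thesis using D3 by (simp add: dem_def)
    qed
    have b1: "card (insert y Vs) + length cs' + (2*D-1)*s \<le> card V"
      using Cons.prems(6) finVs y(2) by simp
    obtain ys' where ys': "length ys' = length cs'" "distinct ys'" "set ys' \<inter> insert y Vs = {}"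
      "GS Fb (insert y Vs \<union> set ys') (insert (v,c,y) Ch \<union> {((y#ys')!k, cs'!k, ys'!k) | k. k < length cs'})"
      using Cons.IH[OF gs1 _ _ False d1 b1] Cons.prems(3) by auto
    have e1: "insert y Vs \<union> set ys' = Vs \<union> set (y#ys')" by auto
    have e2: "insert (v,c,y) Ch \<union> {((y#ys')!k, cs'!k, ys'!k) | k. k < length cs'}
       = Ch \<union> {((v#y#ys')!k, (c#cs')!k, (y#ys')!k) | k. k < length (c#cs')}"
      using trip_cons[of v y ys' c cs' "length cs'"] by auto
    show ?thesis using ys' y(2) e1 e2 by (intro exI[of _ "y#ys'"]) auto
  qed
qed

lemma add_children:
  assumes "GS Fb Vs Ch" "f \<in> Vs" "c \<in> {1..t}" "int k \<le> dem Fb Ch (f,c)"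
    "card Vs + k + (2*D-1)*s \<le> card V"
  shows "\<exists>Y. finite Y \<and> card Y = k \<and> Y \<inter> Vs = {} \<and> GS Fb (Vs \<union> Y) (Ch \<union> (\<lambda>y. (f,c,y)) ` Y)"
  using assms
proof (induction k)
  case 0 then show ?case by (intro exI[of _ "{}"]) simp
next
  case (Suc k)
  obtain Y where Y: "finite Y" "card Y = k" "Y \<inter> Vs = {}" and gs1: "GS Fb (Vs \<union> Y) (Ch \<union> (\<lambda>y. (f,c,y)) ` Y)"
    using Suc.IH[OF Suc.prems(1-3)] Suc.prems(4,5) by auto
  have fFb: "f \<notin> Fb" using Suc.prems(4) by (auto simp: dem_def)
  have finVs: "finite Vs" using GS_finVs[OF Suc.prems(1)] .
  have fin0: "finite {y. (f,c,y) \<in> Ch}" by (rule GS_finch[OF Suc.prems(1)])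
  have "{y. (f,c,y) \<in> Ch \<union> (\<lambda>y. (f,c,y)) ` Y} = {y. (f,c,y) \<in> Ch} \<union> Y" by auto
  moreover have "{y. (f,c,y) \<in> Ch} \<inter> Y = {}" using GS_tr[OF Suc.prems(1)] Y(3) by blast
  ultimately have "card {y. (f,c,y) \<in> Ch \<union> (\<lambda>y. (f,c,y)) ` Y} = card {y. (f,c,y) \<in> Ch} + k"
    using fin0 Y(1,2) by (simp add: card_Un_disjoint)
  hence d1: "dem Fb (Ch \<union> (\<lambda>y. (f,c,y)) ` Y) (f,c) \<ge> 1" using Suc.prems(4) fFb by (simp add: dem_def)
  have cU: "card (Vs \<union> Y) = card Vs + k" using card_Un_disjoint[OF finVs Y(1)] Y(2,3) by (simp add: Int_commute)
  have b1: "card (Vs \<union> Y) + (2*D-1)*s \<le> card V" using cU Suc.prems(5) by simp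
  obtain y where y: "y \<in> N f c" "y \<notin> Vs \<union> Y"
    and gs2: "GS Fb (insert y (Vs \<union> Y)) (insert (f,c,y) (Ch \<union> (\<lambda>y. (f,c,y)) ` Y))"
    using add_leaf[OF gs1 _ Suc.prems(3) d1 b1] Suc.prems(2) by blast
  have e1: "insert y (Vs \<union> Y) = Vs \<union> insert y Y" by auto
  have e2: "insert (f,c,y) (Ch \<union> (\<lambda>y. (f,c,y)) ` Y) = Ch \<union> (\<lambda>y. (f,c,y)) ` (insert y Y)" by auto
  show ?case using gs2 y Y unfolding e1 e2 by (intro exI[of _ "insert y Y"]) auto
qed

lemma add_level:
  assumes gs: "GS Fb Vs Ch" and F: "finite F" "F \<subseteq> Vs" "F \<inter> Fb = {}" and c: "c \<in> {1..t}"
    and nc: "\<forall>f\<in>F. \<forall>y. (f,c,y) \<notin> Ch"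
    and b: "card Vs + (D-1)*card F + (2*D-1)*s \<le> card V"
  shows "\<exists>kids. (\<forall>f\<in>F. finite (kids f) \<and> card (kids f) = D-1 \<and> kids f \<inter> Vs = {}) \<and>
     (\<forall>f\<in>F. \<forall>g\<in>F. f \<noteq> g \<longrightarrow> kids f \<inter> kids g = {}) \<and>
     card (Vs \<union> (\<Union>f\<in>F. kids f)) \<le> card Vs + (D-1)*card F \<and>
     GS Fb (Vs \<union> (\<Union>f\<in>F. kids f)) (Ch \<union> {(f,c,y) | f y. f \<in> F \<and> y \<in> kids f})"
  using F nc b
proof (induction F rule: finite_induct)
  case empty then show ?case using gs by (intro exI[of _ "\<lambda>_. {}"]) simp
next
  case (insert f F)
  obtain kids where k1: "\<forall>g\<in>F. finite (kids g) \<and> card (kids g) = D-1 \<and> kids g \<inter> Vs = {}"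
    and k2: "\<forall>g\<in>F. \<forall>h\<in>F. g \<noteq> h \<longrightarrow> kids g \<inter> kids h = {}"
    and k3: "card (Vs \<union> (\<Union>g\<in>F. kids g)) \<le> card Vs + (D-1)*card F"
    and gs1: "GS Fb (Vs \<union> (\<Union>g\<in>F. kids g)) (Ch \<union> {(g,c,y) | g y. g \<in> F \<and> y \<in> kids g})"
    using insert.IH insert.prems insert.hyps by auto
  let ?Vs1 = "Vs \<union> (\<Union>g\<in>F. kids g)" and ?Ch1 = "Ch \<union> {(g,c,y) | g y. g \<in> F \<and> y \<in> kids g}"
  have fVs: "f \<in> Vs" "f \<notin> Fb" using insert.prems by auto
  have "{y. (f,c,y) \<in> ?Ch1} = {}" using insert.prems(3) insert.hyps(2) by auto
  hence d: "int (D-1) \<le> dem Fb ?Ch1 (f,c)" using fVs insert.hyps(2) by (simp add: dem_def)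
  have b1: "card ?Vs1 + (D-1) + (2*D-1)*s \<le> card V"
  proof -
    have ci: "(D-1)*card (insert f F) = (D-1)*card F + (D-1)" using insert.hyps by simp
    show ?thesis using k3 insert.prems(4) ci by linarith
  qed
  obtain Y where Y: "finite Y" "card Y = D-1" "Y \<inter> ?Vs1 = {}"
    and gs2: "GS Fb (?Vs1 \<union> Y) (?Ch1 \<union> (\<lambda>y. (f,c,y)) ` Y)"
    using add_children[OF gs1 _ c d b1] fVs by blast
  define kids' where "kids' = kids(f := Y)"
  have kf: "kids' f = Y" and kg: "\<And>g. g \<in> F \<Longrightarrow> kids' g = kids g"
    using insert.hyps(2) by (auto simp: kids'_def)
  have e1: "?Vs1 \<union> Y = Vs \<union> (\<Union>g\<in>insert f F. kids' g)" using kf kg by auto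
  have e2: "?Ch1 \<union> (\<lambda>y. (f,c,y)) ` Y = Ch \<union> {(g,c,y) | g y. g \<in> insert f F \<and> y \<in> kids' g}"
    using kf kg by auto
  have A1: "\<forall>g\<in>insert f F. finite (kids' g) \<and> card (kids' g) = D-1 \<and> kids' g \<inter> Vs = {}"
    using k1 kf kg Y by auto
  have A2: "\<forall>g\<in>insert f F. \<forall>h\<in>insert f F. g \<noteq> h \<longrightarrow> kids' g \<inter> kids' h = {}"
  proof (intro ballI impI)
    fix g h assume gh: "g \<in> insert f F" "h \<in> insert f F" "g \<noteq> h"
    show "kids' g \<inter> kids' h = {}"
    proof (cases "g = f")
      case True then show ?thesis using gh Y(3) kf kg by auto
    next
      case False
      show ?thesis
      proof (cases "h = f")
        case True then show ?thesis using gh Y(3) kf kg by auto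
      next
        case False
        then show ?thesis using gh \<open>g \<noteq> f\<close> k2 kg by auto
      qed
    qed
  qed
  have A3: "card (Vs \<union> (\<Union>g\<in>insert f F. kids' g)) \<le> card Vs + (D-1)*card (insert f F)"
  proof -
    have "card (Vs \<union> (\<Union>g\<in>insert f F. kids' g)) = card (?Vs1 \<union> Y)" using e1 by simp
    also have "\<dots> \<le> card ?Vs1 + card Y" by (rule card_Un_le)
    also have "\<dots> \<le> card Vs + (D-1)*card (insert f F)"
    proof -
      have ci: "(D-1)*card (insert f F) = (D-1)*card F + (D-1)" using insert.hyps by simp
      show ?thesis using k3 Y(2) ci by linarith
    qed
    finally show ?thesis .
  qed
  show ?case using A1 A2 A3 gs2 unfolding e1 e2 by blast
qed

definition T :: "nat \<Rightarrow> nat" where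
  "T n = (\<Sum>k\<in>{1..n}. (D-1)^k)"

lemma T_Suc: "T (Suc n) = T n + (D-1)^(Suc n)"
  by (simp add: T_def)

end



context base begin

lemma grow_tree:
  assumes gs: "GS Fb Vs Ch" and r: "r \<in> Vs" "r \<notin> Fb" and nr: "\<forall>j y. (r,j,y) \<notin> Ch"
    and col: "set col \<subseteq> {1..t}" and b: "card Vs + T (length col) + (2*D-1)*s \<le> card V"
  shows "\<exists>Vs' Ch' Ls. GS Fb Vs' Ch' \<and> Vs \<subseteq> Vs' \<and> card Vs' \<le> card Vs + T (length col) \<and> Ch \<subseteq> Ch' \<and>
    (\<forall>u j y. (u,j,y) \<in> Ch' \<longrightarrow> (u,j,y) \<notin> Ch \<longrightarrow> y \<in> Vs' - Vs \<and> (u \<in> Vs' - Vs \<or> u = r)) \<and>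
    finite Ls \<and> card Ls = (D-1)^(length col) \<and> inj_on last Ls \<and>
    (\<forall>l\<in>Ls. length l = Suc (length col) \<and> l!0 = r \<and> distinct l \<and> set l \<subseteq> insert r (Vs' - Vs) \<and>
        (\<forall>k < length col. (l!k, col!k, l!Suc k) \<in> Ch') \<and> (\<forall>j y. (last l, j, y) \<notin> Ch'))"
  using col b
proof (induction col rule: rev_induct)
  case Nil
  have "\<forall>l\<in>{[r]}. length l = Suc (length []) \<and> l!0 = r \<and> distinct l \<and> set l \<subseteq> insert r (Vs - Vs) \<and>
        (\<forall>k < length []. (l!k, []!k, l!Suc k) \<in> Ch) \<and> (\<forall>j y. (last l, j, y) \<notin> Ch)"
    using nr by simp
  then show ?case using gs by (intro exI[of _ Vs] exI[of _ Ch] exI[of _ "{[r]}"]) (simp add: T_def)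
next
  case (snoc c col)
  let ?n = "length col"
  have b0: "card Vs + T ?n + (2*D-1)*s \<le> card V" using snoc.prems(2) T_Suc by simp
  have col0: "set col \<subseteq> {1..t}" using snoc.prems(1) by simp
  have cc: "c \<in> {1..t}" using snoc.prems(1) by simp
  obtain Vs1 Ch1 Ls where gs1: "GS Fb Vs1 Ch1" and V1: "Vs \<subseteq> Vs1" "card Vs1 \<le> card Vs + T ?n"
    and C1: "Ch \<subseteq> Ch1"
    and new1: "\<forall>u j y. (u,j,y) \<in> Ch1 \<longrightarrow> (u,j,y) \<notin> Ch \<longrightarrow> y \<in> Vs1 - Vs \<and> (u \<in> Vs1 - Vs \<or> u = r)"
    and L1: "finite Ls" "card Ls = (D-1)^?n" "inj_on last Ls"
    and L2: "\<forall>l\<in>Ls. length l = Suc ?n \<and> l!0 = r \<and> distinct l \<and> set l \<subseteq> insert r (Vs1 - Vs) \<and>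
        (\<forall>k < ?n. (l!k, col!k, l!Suc k) \<in> Ch1) \<and> (\<forall>j y. (last l, j, y) \<notin> Ch1)"
    using snoc.IH[OF col0 b0] by blast
  define F where "F = last ` Ls"
  have finF: "finite F" using L1(1) by (simp add: F_def)
  have cF: "card F = (D-1)^?n" using card_image[OF L1(3)] L1(2) by (simp add: F_def)
  have lastin: "last l \<in> insert r (Vs1 - Vs)" if "l \<in> Ls" for l
  proof -
    have "l \<noteq> []" using L2 that by (metis Zero_not_Suc list.size(3))
    then have "last l \<in> set l" by simp
    then show ?thesis using L2 that by blast
  qed
  have FbVs: "Fb \<subseteq> Vs" by (rule GS_FbVs[OF gs])
  have FV: "F \<subseteq> Vs1" using lastin r V1 by (auto simp: F_def)
  have FFb: "F \<inter> Fb = {}" using lastin r FbVs by (force simp: F_def)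
  have nc: "\<forall>f\<in>F. \<forall>y. (f,c,y) \<notin> Ch1" using L2 by (auto simp: F_def)
  have pw: "(D-1) * (D-1)^?n = (D-1)^(Suc ?n)" by simp
  have b1: "card Vs1 + (D-1)*card F + (2*D-1)*s \<le> card V"
    using snoc.prems(2) V1(2) cF pw T_Suc[of ?n] by simp
  obtain kids where k1: "\<forall>f\<in>F. finite (kids f) \<and> card (kids f) = D-1 \<and> kids f \<inter> Vs1 = {}"
    and k2: "\<forall>f\<in>F. \<forall>g\<in>F. f \<noteq> g \<longrightarrow> kids f \<inter> kids g = {}"
    and k3: "card (Vs1 \<union> (\<Union>f\<in>F. kids f)) \<le> card Vs1 + (D-1)*card F"
    and gs2: "GS Fb (Vs1 \<union> (\<Union>f\<in>F. kids f)) (Ch1 \<union> {(f,c,y) | f y. f \<in> F \<and> y \<in> kids f})"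
    using add_level[OF gs1 finF FV FFb cc nc b1] by blast
  define Vs2 where "Vs2 = Vs1 \<union> (\<Union>f\<in>F. kids f)"
  define Ch2 where "Ch2 = Ch1 \<union> {(f,c,y) | f y. f \<in> F \<and> y \<in> kids f}"
  define Sg where "Sg = (SIGMA l:Ls. kids (last l))"
  define Ls' where "Ls' = (\<lambda>(l,y). l @ [y]) ` Sg"
  have finSg: "finite Sg" unfolding Sg_def using L1(1) k1 by (auto simp: F_def)
  have injS: "inj_on (\<lambda>(l,y). l @ [y]) Sg" by (auto simp: inj_on_def)
  have cSg: "card Sg = (D-1) * card Ls"
  proof -
    have "card Sg = (\<Sum>l\<in>Ls. card (kids (last l)))" unfolding Sg_def
      by (rule card_SigmaI) (use L1(1) k1 in \<open>auto simp: F_def\<close>)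
    also have "\<dots> = (\<Sum>l\<in>Ls. D-1)" by (rule sum.cong) (use k1 in \<open>auto simp: F_def\<close>)
    finally show ?thesis by simp
  qed
  have R1: "GS Fb Vs2 Ch2" using gs2 by (simp add: Vs2_def Ch2_def)
  have R2: "Vs \<subseteq> Vs2" using V1 by (auto simp: Vs2_def)
  have R3: "card Vs2 \<le> card Vs + T (length (col @ [c]))"
    using k3 V1(2) cF pw T_Suc[of ?n] by (simp add: Vs2_def)
  have R4: "Ch \<subseteq> Ch2" using C1 by (auto simp: Ch2_def)
  have R5: "\<forall>u j y. (u,j,y) \<in> Ch2 \<longrightarrow> (u,j,y) \<notin> Ch \<longrightarrow> y \<in> Vs2 - Vs \<and> (u \<in> Vs2 - Vs \<or> u = r)"
  proof (intro allI impI)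
    fix u j y assume a: "(u,j,y) \<in> Ch2" "(u,j,y) \<notin> Ch"
    show "y \<in> Vs2 - Vs \<and> (u \<in> Vs2 - Vs \<or> u = r)"
    proof (cases "(u,j,y) \<in> Ch1")
      case True
      then show ?thesis using new1 a(2) by (auto simp: Vs2_def)
    next
      case False
      then have "u \<in> F" "y \<in> kids u" using a(1) by (auto simp: Ch2_def)
      moreover then have "y \<notin> Vs1" using k1 by blast
      ultimately show ?thesis using V1(1) lastin by (auto simp: Vs2_def F_def)
    qed
  qed
  have R6: "finite Ls'" using finSg by (simp add: Ls'_def)
  have R7: "card Ls' = (D-1)^(length (col @ [c]))"
    using card_image[OF injS] cSg L1(2) by (simp add: Ls'_def)
  have R8: "inj_on last Ls'"
  proof (rule inj_onI)
    fix a b assume ab: "a \<in> Ls'" "b \<in> Ls'" "last a = last b"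
    obtain la ya where A: "a = la @ [ya]" "la \<in> Ls" "ya \<in> kids (last la)" using ab(1) by (auto simp: Ls'_def Sg_def)
    obtain lb yb where B: "b = lb @ [yb]" "lb \<in> Ls" "yb \<in> kids (last lb)" using ab(2) by (auto simp: Ls'_def Sg_def)
    have "ya = yb" using ab(3) A B by simp
    hence "last la = last lb" using k2 A B by (auto simp: F_def)
    hence "la = lb" using L1(3) A B by (meson inj_onD)
    then show "a = b" using A B \<open>ya = yb\<close> by simp
  qed
  have R9: "\<forall>l\<in>Ls'. length l = Suc (length (col @ [c])) \<and> l!0 = r \<and> distinct l \<and> set l \<subseteq> insert r (Vs2 - Vs) \<and>
        (\<forall>k < length (col @ [c]). (l!k, (col @ [c])!k, l!Suc k) \<in> Ch2) \<and> (\<forall>j y. (last l, j, y) \<notin> Ch2)"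
  proof
    fix a assume "a \<in> Ls'"
    then obtain l y where A: "a = l @ [y]" "l \<in> Ls" "y \<in> kids (last l)" by (auto simp: Ls'_def Sg_def)
    have lF: "last l \<in> F" using A(2) by (simp add: F_def)
    have yV1: "y \<notin> Vs1" using k1 A(3) lF by blast
    have yV2: "y \<in> Vs2" using A(3) lF by (auto simp: Vs2_def)
    have ll: "length l = Suc ?n" "l!0 = r" "distinct l" "set l \<subseteq> insert r (Vs1 - Vs)"
      "\<forall>k < ?n. (l!k, col!k, l!Suc k) \<in> Ch1" using L2 A(2) by auto
    have sl: "set l \<subseteq> Vs1" using ll(4) r V1(1) by blast
    have p1: "length a = Suc (length (col @ [c]))" using A(1) ll(1) by simp
    have p2: "a!0 = r" using A(1) ll(1,2) by (simp add: nth_append)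
    have p3: "distinct a" using A(1) ll(3) sl yV1 by auto
    have p4: "set a \<subseteq> insert r (Vs2 - Vs)" using A(1) ll(4) yV1 yV2 V1(1) by (auto simp: Vs2_def)
    have p5: "\<forall>k < length (col @ [c]). (a!k, (col @ [c])!k, a!Suc k) \<in> Ch2"
    proof (intro allI impI)
      fix k assume "k < length (col @ [c])"
      hence k: "k < Suc ?n" by simp
      show "(a!k, (col @ [c])!k, a!Suc k) \<in> Ch2"
      proof (cases "k < ?n")
        case True
        then have "(l!k, col!k, l!Suc k) \<in> Ch1" using ll(5) by blast
        moreover have "a!k = l!k" "a!Suc k = l!Suc k" "(col @ [c])!k = col!k"
          using True ll(1) A(1) by (auto simp: nth_append)
        ultimately show ?thesis by (simp add: Ch2_def)
      next
        case False
        hence kn: "k = ?n" using k by simp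
        have "a!k = last l" using kn ll(1) A(1)
          by (metis diff_Suc_1 last_conv_nth list.size(3) nat.distinct(1) nth_append_left lessI)
        moreover have "a!Suc k = y" using kn ll(1) A(1) by (simp add: nth_append)
        moreover have "(col @ [c])!k = c" using kn by simp
        moreover have "(last l, c, y) \<in> Ch2" using lF A(3) by (auto simp: Ch2_def)
        ultimately show ?thesis by simp
      qed
    qed
    have p6: "\<forall>j z. (last a, j, z) \<notin> Ch2"
    proof (intro allI)
      fix j z
      have "last a = y" using A(1) by simp
      moreover have "(y, j, z) \<notin> Ch1" using GS_tr[OF gs1] yV1 by blast
      moreover have "y \<notin> F" using FV yV1 by blast
      ultimately show "(last a, j, z) \<notin> Ch2" by (auto simp: Ch2_def)
    qed
    show "length a = Suc (length (col @ [c])) \<and> a!0 = r \<and> distinct a \<and> set a \<subseteq> insert r (Vs2 - Vs) \<and>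
        (\<forall>k < length (col @ [c]). (a!k, (col @ [c])!k, a!Suc k) \<in> Ch2) \<and> (\<forall>j y. (last a, j, y) \<notin> Ch2)"
      using p1 p2 p3 p4 p5 p6 by blast
  qed
  show ?case
    apply (rule exI[of _ Vs2], rule exI[of _ Ch2], rule exI[of _ Ls'])
    using R1 R2 R3 R4 R5 R6 R7 R8 R9 by blast
qed

end



context base begin

lemma dem_eq_ch: "{y. (u,j,y) \<in> Ch'} = {y. (u,j,y) \<in> Ch} \<Longrightarrow> dem Fb Ch' (u,j) = dem Fb Ch (u,j)"
  by (simp add: dem_def)

lemma connect:
  assumes gs: "GS Fb Vs Ch" and x0: "x0 \<in> Vs" "x0 \<notin> Fb" and y0: "y0 \<in> Vs" "y0 \<notin> Fb" and xy: "x0 \<noteq> y0"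
    and Le: "length cs = Le" "2*d+3 \<le> Le" and cs: "set cs \<subseteq> {1..t}" and sd: "s \<le> (D-1)^d"
    and dx: "dem Fb Ch (x0, cs!0) \<ge> 1" and dy: "dem Fb Ch (y0, cs!(Le-1)) \<ge> 1"
    and b: "card Vs + (Le - 1) + 2 * T d + (2*D-1)*s \<le> card V"
  shows "\<exists>Q Ch'. length Q = Suc Le \<and> Q!0 = x0 \<and> Q!Le = y0 \<and> distinct Q \<and> set Q \<inter> Vs = {x0,y0} \<and>
     (\<forall>k<Le. {Q!k, Q!Suc k} \<in> E (cs!k)) \<and> GS Fb (Vs \<union> set Q) Ch' \<and> Ch \<subseteq> Ch' \<and>
     (\<forall>u j y. (u,j,y) \<in> Ch' \<longrightarrow> (u,j,y) \<notin> Ch \<longrightarrow> u \<in> Vs \<longrightarrow>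
        (u = x0 \<and> j = cs!0 \<and> y = Q!1) \<or> (u = y0 \<and> j = cs!(Le-1) \<and> y = Q!(Le-1)))"
proof -
  define p1 where "p1 = Le - 2*d - 2"
  have p1pos: "p1 \<ge> 1" and Lep: "Le = p1 + 2*d + 2" using Le(2) by (auto simp: p1_def)
  have FbVs: "Fb \<subseteq> Vs" by (rule GS_FbVs[OF gs])
  have finVs: "finite Vs" by (rule GS_finVs[OF gs])
  have csi: "i < Le \<Longrightarrow> cs!i \<in> {1..t}" for i using cs Le(1) by (meson nth_mem subsetD)
  define cs1 where "cs1 = take p1 cs"
  have csne: "cs \<noteq> []" using Le Lep by auto
  have cs1: "set cs1 \<subseteq> {1..t}" "cs1 \<noteq> []" "length cs1 = p1" "hd cs1 = cs!0"
    "\<And>k. k < p1 \<Longrightarrow> cs1!k = cs!k"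
  proof -
    show "set cs1 \<subseteq> {1..t}" using cs set_take_subset[of p1 cs] unfolding cs1_def by blast
    show "length cs1 = p1" using Lep Le(1) by (simp add: cs1_def)
    then show "cs1 \<noteq> []" using p1pos by auto
    show "\<And>k. k < p1 \<Longrightarrow> cs1!k = cs!k" by (simp add: cs1_def)
    have "hd cs1 = cs1!0" using \<open>cs1 \<noteq> []\<close> by (simp add: hd_conv_nth)
    then show "hd cs1 = cs!0" using p1pos by (simp add: cs1_def)
  qed
  have b1: "card Vs + length cs1 + (2*D-1)*s \<le> card V" using b cs1(3) Lep by linarith
  obtain ys1 where Y1: "length ys1 = length cs1" "distinct ys1" "set ys1 \<inter> Vs = {}"
    and gs1: "GS Fb (Vs \<union> set ys1) (Ch \<union> {((x0#ys1)!k, cs1!k, ys1!k) | k. k < length cs1})"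
    using grow_path[OF gs x0(1) cs1(1) cs1(2) _ b1] dx cs1(4) by auto
  define Vs1 where "Vs1 = Vs \<union> set ys1"
  define Tr1 where "Tr1 = {((x0#ys1)!k, cs1!k, ys1!k) | k. k < p1}"
  define Ch1 where "Ch1 = Ch \<union> Tr1"
  have gs1': "GS Fb Vs1 Ch1" using gs1 cs1(3) by (simp add: Vs1_def Ch1_def Tr1_def)
  have lys1: "length ys1 = p1" using Y1(1) cs1(3) by simp
  have cV1: "card Vs1 = card Vs + p1"
    using card_Un_disjoint[OF finVs _ , of "set ys1"] Y1(3) distinct_card[OF Y1(2)] lys1
    by (simp add: Vs1_def Int_commute)
  define cL where "cL = cs!(Le-1)"
  have cL: "cL \<in> {1..t}" using csi[of "Le-1"] Lep by (simp add: cL_def)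
  have y0V1: "y0 \<notin> set ys1" using y0 Y1(3) by blast
  have x0V1: "x0 \<notin> set ys1" using x0 Y1(3) by blast
  have "{z. (y0, cL, z) \<in> Ch1} = {z. (y0, cL, z) \<in> Ch}"
  proof -
    have "(y0, cL, z) \<notin> Tr1" for z
    proof
      assume "(y0, cL, z) \<in> Tr1"
      then obtain k where k: "k < p1" "(x0#ys1)!k = y0" by (auto simp: Tr1_def)
      show False
      proof (cases k)
        case 0 then show False using k xy by simp
      next
        case (Suc k')
        have "k' < length ys1" using k Suc lys1 by simp
        then have "ys1!k' \<in> set ys1" by (rule nth_mem)
        moreover have "ys1!k' = y0" using k(2) Suc by simp
        ultimately show False using y0V1 by simp
      qed
    qed
    then show ?thesis by (auto simp: Ch1_def)
  qed
  hence "dem Fb Ch1 (y0, cL) = dem Fb Ch (y0, cL)" by (rule dem_eq_ch)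
  hence dy1: "dem Fb Ch1 (y0, hd [cL]) \<ge> 1" using dy unfolding cL_def by simp
  have b2: "card Vs1 + length [cL] + (2*D-1)*s \<le> card V" using b cV1 Lep by simp
  have y0V1': "y0 \<in> Vs1" using y0 by (simp add: Vs1_def)
  have cLs: "set [cL] \<subseteq> {1..t}" using cL by simp
  have cLne: "[cL] \<noteq> []" by simp
  obtain ys2 where Y2: "length ys2 = length [cL]" "set ys2 \<inter> Vs1 = {}"
    and gs2: "GS Fb (Vs1 \<union> set ys2) (Ch1 \<union> {((y0#ys2)!k, [cL]!k, ys2!k) | k. k < length [cL]})"
    using grow_path[OF gs1' y0V1' cLs cLne dy1 b2] by blast
  obtain y where ys2: "ys2 = [y]" using Y2(1) by (metis length_0_conv length_Suc_conv list.size(3,4))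
  have yV1: "y \<notin> Vs1" using Y2(2) ys2 by simp
  define Vs2 where "Vs2 = insert y Vs1"
  define Ch2 where "Ch2 = insert (y0, cL, y) Ch1"
  have "{((y0#ys2)!k, [cL]!k, ys2!k) | k. k < length [cL]} = {(y0, cL, y)}" using ys2 by auto
  hence gs2': "GS Fb Vs2 Ch2" using gs2 ys2 by (simp add: Vs2_def Ch2_def)
  have cV2: "card Vs2 = card Vs + p1 + 1"
    using cV1 yV1 finVs by (simp add: Vs2_def Vs1_def)
  define x where "x = ys1!(p1 - 1)"
  have xin: "x \<in> set ys1" using p1pos lys1 by (simp add: x_def)
  have xV: "x \<notin> Vs" using xin Y1(3) by blast
  have xFb: "x \<notin> Fb" using xV FbVs by blast
  have xV2: "x \<in> Vs2" using xin by (simp add: Vs2_def Vs1_def)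
  have xy': "x \<noteq> y" using xin yV1 by (auto simp: Vs1_def)
  have nx: "\<forall>j z. (x, j, z) \<notin> Ch2"
  proof (intro allI)
    fix j z
    have "(x, j, z) \<notin> Ch" using GS_tr[OF gs] xV by blast
    moreover have "(x, j, z) \<notin> Tr1"
    proof
      assume "(x, j, z) \<in> Tr1"
      then obtain k where k: "k < p1" "(x0#ys1)!k = x" by (auto simp: Tr1_def)
      show False
      proof (cases k)
        case 0 then show False using k xin x0V1 by simp
      next
        case (Suc k')
        then have "ys1!k' = ys1!(p1-1)" using k by (simp add: x_def)
        then have "k' = p1 - 1" using Y1(2) lys1 k Suc by (simp add: nth_eq_iff_index_eq)
        then show False using k Suc by simp
      qed
    qed
    moreover have "x \<noteq> y0" using xV y0 by blast
    ultimately show "(x, j, z) \<notin> Ch2" by (auto simp: Ch2_def Ch1_def)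
  qed
  define colx where "colx = map (\<lambda>k. cs!(p1+k)) [0..<d]"
  have colx: "set colx \<subseteq> {1..t}" "length colx = d" "\<And>k. k < d \<Longrightarrow> colx!k = cs!(p1+k)"
    using csi Lep by (auto simp: colx_def)
  have b3: "card Vs2 + T (length colx) + (2*D-1)*s \<le> card V"
  proof -
    have "T (length colx) = T d" using colx(2) by simp
    then show ?thesis using b cV2 Lep by linarith
  qed
  obtain Vs3 Ch3 Lx where gs3: "GS Fb Vs3 Ch3" and V3: "Vs2 \<subseteq> Vs3" "card Vs3 \<le> card Vs2 + T d"
    and C3: "Ch2 \<subseteq> Ch3"
    and new3: "\<forall>u j z. (u,j,z) \<in> Ch3 \<longrightarrow> (u,j,z) \<notin> Ch2 \<longrightarrow> z \<in> Vs3 - Vs2 \<and> (u \<in> Vs3 - Vs2 \<or> u = x)"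
    and Lx1: "finite Lx" "card Lx = (D-1)^d" "inj_on last Lx"
    and Lx2: "\<forall>l\<in>Lx. length l = Suc d \<and> l!0 = x \<and> distinct l \<and> set l \<subseteq> insert x (Vs3 - Vs2) \<and>
        (\<forall>k < d. (l!k, colx!k, l!Suc k) \<in> Ch3) \<and> (\<forall>j z. (last l, j, z) \<notin> Ch3)"
    using grow_tree[OF gs2' xV2 xFb nx colx(1) b3] colx(2) by metis
  have yV2: "y \<in> Vs2" by (simp add: Vs2_def)
  have yFb: "y \<notin> Fb" using yV1 FbVs by (auto simp: Vs1_def)
  have ny: "\<forall>j z. (y, j, z) \<notin> Ch3"
  proof (intro allI)
    fix j z
    have "(y, j, z) \<notin> Ch1" using GS_tr[OF gs1'] yV1 by blast
    moreover have "y \<noteq> y0" using yV1 y0 by (auto simp: Vs1_def)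
    ultimately have "(y, j, z) \<notin> Ch2" by (simp add: Ch2_def)
    then show "(y, j, z) \<notin> Ch3" using new3 yV2 xy' by blast
  qed
  define coly where "coly = map (\<lambda>k. cs!(Le-2-k)) [0..<d]"
  have coly: "set coly \<subseteq> {1..t}" "length coly = d" "\<And>k. k < d \<Longrightarrow> coly!k = cs!(Le-2-k)"
    using csi Lep by (auto simp: coly_def)
  have b4: "card Vs3 + T (length coly) + (2*D-1)*s \<le> card V"
  proof -
    have "T (length coly) = T d" using coly(2) by simp
    then show ?thesis using b cV2 V3(2) Lep by linarith
  qed
  have yV3: "y \<in> Vs3" using yV2 V3(1) by blast
  obtain Vs4 Ch4 Ly where gs4: "GS Fb Vs4 Ch4" and V4: "Vs3 \<subseteq> Vs4" "card Vs4 \<le> card Vs3 + T d"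
    and C4: "Ch3 \<subseteq> Ch4"
    and new4: "\<forall>u j z. (u,j,z) \<in> Ch4 \<longrightarrow> (u,j,z) \<notin> Ch3 \<longrightarrow> z \<in> Vs4 - Vs3 \<and> (u \<in> Vs4 - Vs3 \<or> u = y)"
    and Ly1: "finite Ly" "card Ly = (D-1)^d" "inj_on last Ly"
    and Ly2: "\<forall>l\<in>Ly. length l = Suc d \<and> l!0 = y \<and> distinct l \<and> set l \<subseteq> insert y (Vs4 - Vs3) \<and>
        (\<forall>k < d. (l!k, coly!k, l!Suc k) \<in> Ch4) \<and> (\<forall>j z. (last l, j, z) \<notin> Ch4)"
    using grow_tree[OF gs3 yV3 yFb ny coly(1) b4] coly(2) by metis
  define cm where "cm = cs!(p1+d)"
  have cm: "cm \<in> {1..t}" using csi[of "p1+d"] Lep by (simp add: cm_def)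
  have lastx: "last l \<in> Vs4" if "l \<in> Lx" for l
  proof -
    have "l \<noteq> []" using Lx2 that by (metis Zero_not_Suc list.size(3))
    then have "last l \<in> set l" by simp
    then show ?thesis using Lx2 that xV2 V3(1) V4(1) by blast
  qed
  have lasty: "last l \<in> Vs4" if "l \<in> Ly" for l
  proof -
    have "l \<noteq> []" using Ly2 that by (metis Zero_not_Suc list.size(3))
    then have "last l \<in> set l" by simp
    then show ?thesis using Ly2 that yV3 V4(1) by blast
  qed
  have V4V: "Vs4 \<subseteq> V" by (rule GS_VsV[OF gs4])
  define X where "X = (last ` Lx) \<times> {cm}"
  define Yl where "Yl = last ` Ly"
  have XP: "X \<subseteq> V \<times> {1..t}" using lastx V4V cm by (auto simp: X_def)
  have YP: "Yl \<subseteq> V" using lasty V4V by (auto simp: Yl_def)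
  have cX: "card X \<ge> s" using card_image[OF Lx1(3)] Lx1(2) sd by (simp add: X_def card_cartesian_product)
  have cY: "card Yl \<ge> s" using card_image[OF Ly1(3)] Ly1(2) sd by (simp add: Yl_def)
  have "\<exists>(v,i)\<in>X. \<exists>w\<in>Yl. {v, w} \<in> E i" using sj XP YP cX cY unfolding s_joined_def by blast
  then obtain lx ly where lx: "lx \<in> Lx" and ly: "ly \<in> Ly" and join: "{last lx, last ly} \<in> E cm"
    by (auto simp: X_def Yl_def)
  have lxp: "length lx = Suc d" "lx!0 = x" "distinct lx" "set lx \<subseteq> insert x (Vs3 - Vs2)"
    "\<forall>k < d. (lx!k, colx!k, lx!Suc k) \<in> Ch3" using Lx2 lx by auto
  have lyp: "length ly = Suc d" "ly!0 = y" "distinct ly" "set ly \<subseteq> insert y (Vs4 - Vs3)"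
    "\<forall>k < d. (ly!k, coly!k, ly!Suc k) \<in> Ch4" using Ly2 ly by auto
  define Q where "Q = (x0 # ys1) @ (tl lx @ (rev ly @ [y0]))"
  have lQ: "length Q = Suc Le" using lys1 lxp(1) lyp(1) Lep by (simp add: Q_def)
  have lx0: "length (x0#ys1) = Suc p1" using lys1 by simp
  have ltl: "length (tl lx) = d" using lxp(1) by simp
  have lrev: "length (rev ly) = Suc d" using lyp(1) by simp
  have Q1: "k \<le> p1 \<Longrightarrow> Q!k = (x0#ys1)!k" for k
  proof -
    assume "k \<le> p1"
    hence "k < length (x0#ys1)" using lx0 by simp
    thus ?thesis unfolding Q_def by (rule nth_append_left)
  qed
  have Q2: "i \<le> d \<Longrightarrow> Q!(p1+i) = lx!i" for i
  proof -
    assume i: "i \<le> d"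
    show ?thesis
    proof (cases i)
      case 0
      have "Q!(p1+i) = (x0#ys1)!p1" using Q1[of p1] 0 by simp
      also have "\<dots> = ys1!(p1-1)" using p1pos by (cases p1) auto
      finally show ?thesis using 0 lxp(2) by (simp add: x_def)
    next
      case (Suc i')
      have "Q!(p1+i) = Q!(length (x0#ys1) + i')" using lx0 Suc by simp
      also have "\<dots> = (tl lx @ (rev ly @ [y0]))!i'" unfolding Q_def by (rule nth_append_length_plus)
      also have "\<dots> = (tl lx)!i'" using Suc i ltl by (simp add: nth_append_left)
      also have "\<dots> = lx!i" using Suc i lxp(1) by (simp add: nth_tl)
      finally show ?thesis .
    qed
  qed
  have Q3: "i \<le> d \<Longrightarrow> Q!(p1+d+1+i) = ly!(d-i)" for i
  proof -
    assume i: "i \<le> d"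
    have "Q!(p1+d+1+i) = Q!(length (x0#ys1) + (length (tl lx) + i))" using lx0 ltl by (simp add: add.assoc)
    also have "\<dots> = (tl lx @ (rev ly @ [y0]))!(length (tl lx) + i)" unfolding Q_def by (rule nth_append_length_plus)
    also have "\<dots> = (rev ly @ [y0])!i" by (rule nth_append_length_plus)
    also have "\<dots> = rev ly ! i" using i lrev by (simp add: nth_append_left)
    also have "\<dots> = ly!(d-i)" using i lyp(1) by (simp add: rev_nth)
    finally show ?thesis .
  qed
  have QLm: "Q!(Le-1) = y"
  proof -
    have "Le - 1 = p1+d+1+d" using Lep by linarith
    hence "Q!(Le-1) = Q!(p1+d+1+d)" by simp
    also have "\<dots> = ly!0" using Q3[of d] by simp
    finally show ?thesis using lyp(2) by simp
  qed
  have Q4: "Q!Le = y0"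
  proof -
    have ix: "Le = length (x0#ys1) + (length (tl lx) + (length (rev ly) + 0))" using lx0 ltl lrev Lep by linarith
    have "Q!Le = Q!(length (x0#ys1) + (length (tl lx) + (length (rev ly) + 0)))" using ix by (rule arg_cong)
    also have "\<dots> = (tl lx @ (rev ly @ [y0]))!(length (tl lx) + (length (rev ly) + 0))" unfolding Q_def by (rule nth_append_length_plus)
    also have "\<dots> = (rev ly @ [y0])!(length (rev ly) + 0)" by (rule nth_append_length_plus)
    also have "\<dots> = y0" by (simp add: nth_append)
    finally show ?thesis .
  qed
  have Q0: "Q!0 = x0" by (simp add: Q_def)
  have ys1V: "set ys1 \<subseteq> Vs1 - Vs" using Y1(3) by (auto simp: Vs1_def)
  have tlx: "set (tl lx) \<subseteq> Vs3 - Vs2"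
  proof -
    have "lx = x # tl lx" using lxp(1,2) by (metis Zero_not_Suc hd_conv_nth list.exhaust_sel list.size(3))
    then have "x \<notin> set (tl lx)" "set (tl lx) \<subseteq> set lx" using lxp(3) by (metis distinct.simps(2)) (metis list.set_sel(2) subsetI list.sel(2) list.set(1) empty_iff)
    then show ?thesis using lxp(4) by blast
  qed
  have lyV: "set ly \<subseteq> insert y (Vs4 - Vs3)" by (rule lyp(4))
  have Vchain: "Vs \<subseteq> Vs1" "Vs1 \<subseteq> Vs2" "Vs2 \<subseteq> Vs3" "Vs3 \<subseteq> Vs4"
    using V3(1) V4(1) by (auto simp: Vs1_def Vs2_def)
  have Chain: "Ch \<subseteq> Ch1" "Ch1 \<subseteq> Ch2" "Ch2 \<subseteq> Ch3" "Ch3 \<subseteq> Ch4"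
    using C3 C4 by (auto simp: Ch1_def Ch2_def)
  have trk: "((x0#ys1)!k, cs1!k, ys1!k) \<in> Ch4" if "k < p1" for k
  proof -
    have "((x0#ys1)!k, cs1!k, ys1!k) \<in> Tr1" unfolding Tr1_def using that by blast
    then have "((x0#ys1)!k, cs1!k, ys1!k) \<in> Ch1" by (simp add: Ch1_def)
    then show ?thesis using Chain by blast
  qed
  have setQ: "set Q = insert x0 (insert y0 (set ys1 \<union> set (tl lx) \<union> set ly))" by (auto simp: Q_def)
  have yVs2: "y \<in> Vs2 - Vs1" using yV1 by (simp add: Vs2_def)
  have dQ: "distinct Q"
  proof -
    have "distinct (tl lx)" using lxp(3) by (simp add: distinct_tl)
    moreover have "set ys1 \<inter> set (tl lx) = {}" using ys1V tlx Vchain by blast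
    moreover have "set ys1 \<inter> set ly = {}" using ys1V lyV yVs2 Vchain by blast
    moreover have "set (tl lx) \<inter> set ly = {}" using tlx lyV yVs2 Vchain by blast
    moreover have "x0 \<notin> set ys1 \<union> set (tl lx) \<union> set ly" using x0 ys1V tlx lyV yVs2 Vchain by blast
    moreover have "y0 \<notin> set ys1 \<union> set (tl lx) \<union> set ly" using y0 ys1V tlx lyV yVs2 Vchain by blast
    ultimately show ?thesis using Y1(2) lyp(3) xy by (auto simp: Q_def)
  qed
  have n1: "set ys1 \<inter> Vs = {}" using Y1(3) by blast
  have n2: "set (tl lx) \<inter> Vs = {}" using tlx Vchain by blast
  have n3: "set ly \<inter> Vs = {}" using lyV yVs2 Vchain by blast
  have QVs: "set Q \<inter> Vs = {x0, y0}" unfolding setQ using n1 n2 n3 x0 y0 by auto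
  have m1: "set ys1 \<subseteq> Vs4" using ys1V Vchain by blast
  have m2: "set (tl lx) \<subseteq> Vs4" using tlx Vchain by blast
  have m3: "set ly \<subseteq> Vs4" using lyV yVs2 Vchain by blast
  have VsV4: "Vs \<subseteq> Vs4" using Vchain by blast
  have QV4: "set Q \<subseteq> Vs4" unfolding setQ using m1 m2 m3 x0(1) y0(1) VsV4 by blast
  have edge_of: "{a, b} \<in> E j" if "(a,j,b) \<in> Ch4" for a j b using GS_tr[OF gs4 that] by blast
  have edges: "\<forall>k<Le. {Q!k, Q!Suc k} \<in> E (cs!k)"
  proof (intro allI impI)
    fix k assume k: "k < Le"
    consider "k < p1" | "p1 \<le> k" "k < p1 + d" | "k = p1 + d" | "p1 + d < k" "k < Le - 1" | "k = Le - 1"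
      using k by linarith
    then show "{Q!k, Q!Suc k} \<in> E (cs!k)"
    proof cases
      case 1
      have "((x0#ys1)!k, cs!k, ys1!k) \<in> Ch4" using trk[OF 1] cs1(5)[OF 1] by simp
      moreover have "Q!k = (x0#ys1)!k" "Q!Suc k = ys1!k" using 1 Q1[of k] Q1[of "Suc k"] by auto
      ultimately show ?thesis using edge_of by simp
    next
      case 2
      define i where "i = k - p1"
      have i: "i < d" "k = p1 + i" using 2 by (auto simp: i_def)
      have "(lx!i, colx!i, lx!Suc i) \<in> Ch4" using lxp(5) i(1) C4 by blast
      moreover have "colx!i = cs!k" using colx(3) i by simp
      moreover have "Q!k = lx!i" "Q!Suc k = lx!Suc i" using Q2[of i] Q2[of "Suc i"] i by auto
      ultimately show ?thesis using edge_of by simp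
    next
      case 3
      have nx: "lx \<noteq> []" using lxp(1) by auto
      have ny: "ly \<noteq> []" using lyp(1) by auto
      have "last lx = lx!d" using last_conv_nth[OF nx] lxp(1) by simp
      hence "Q!k = last lx" using Q2[of d] 3 by simp
      moreover have "last ly = ly!d" using last_conv_nth[OF ny] lyp(1) by simp
      hence "Q!Suc k = last ly" using Q3[of 0] 3 by simp
      ultimately show ?thesis using join 3 by (simp add: cm_def)
    next
      case 4
      define i where "i = k - (p1 + d + 1)"
      have i: "i < d" "k = p1 + d + 1 + i" using 4 Lep by (auto simp: i_def)
      define j where "j = d - Suc i"
      have j: "j < d" "d - i = Suc j" "d - Suc i = j" using i by (auto simp: j_def)
      have "(ly!j, coly!j, ly!Suc j) \<in> Ch4" using lyp(5) j by auto
      moreover have "coly!j = cs!k"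
      proof -
        have "Le - 2 - j = k" using i j Lep by linarith
        then show ?thesis using coly(3)[OF j(1)] by simp
      qed
      moreover have "Q!k = ly!Suc j" using Q3[of i] i j by simp
      moreover have "Q!Suc k = ly!j" using Q3[of "Suc i"] i j by simp
      ultimately show ?thesis using edge_of by (simp add: insert_commute)
    next
      case 5
      have "Q!k = y" using QLm 5 by simp
      moreover have "Q!Suc k = y0" using 5 Q4 Lep by simp
      moreover have "(y0, cL, y) \<in> Ch4" using Chain by (auto simp: Ch2_def)
      ultimately show ?thesis using edge_of 5 by (simp add: insert_commute cL_def)
    qed
  qed
  have par: "\<exists>p\<in>set Q. \<exists>j. (p,j,z) \<in> Ch4" if z: "z \<in> set Q" "z \<notin> Vs" for z
  proof -
    have "z \<in> set ys1 \<or> z \<in> set (tl lx) \<or> z \<in> set ly" using z setQ x0 y0 by auto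
    then show ?thesis
    proof (elim disjE)
      assume "z \<in> set ys1"
      then obtain k where k: "k < p1" "z = ys1!k" using lys1 by (metis in_set_conv_nth)
      have "((x0#ys1)!k, cs1!k, ys1!k) \<in> Ch4" by (rule trk[OF k(1)])
      moreover have "(x0#ys1)!k \<in> set Q" using k lys1 by (auto simp: Q_def nth_Cons' )
      ultimately show ?thesis using k by blast
    next
      assume "z \<in> set (tl lx)"
      then obtain i where i: "i < d" "z = (tl lx)!i" using lxp(1) by (metis in_set_conv_nth length_tl diff_Suc_1)
      have "z = lx!Suc i" using i lxp(1) by (simp add: nth_tl)
      moreover have "(lx!i, colx!i, lx!Suc i) \<in> Ch4" using lxp(5) i(1) C4 by blast
      moreover have "lx!i \<in> set Q"
      proof -
        have "p1 + i < length Q" using i lQ Lep by linarith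
        then have "Q!(p1+i) \<in> set Q" by (rule nth_mem)
        then show ?thesis using Q2[of i] i by simp
      qed
      ultimately show ?thesis by blast
    next
      assume "z \<in> set ly"
      then obtain i where i: "i \<le> d" "z = ly!i" using lyp(1) by (metis in_set_conv_nth less_Suc_eq_le)
      show ?thesis
      proof (cases i)
        case 0
        then have "z = y" using i lyp(2) by simp
        moreover have "(y0, cL, y) \<in> Ch4" using Chain by (auto simp: Ch2_def)
        ultimately show ?thesis using Q4 lQ by (metis lessI nth_mem)
      next
        case (Suc i')
        have "(ly!i', coly!i', ly!Suc i') \<in> Ch4" using lyp(5) Suc i by auto
        moreover have "ly!i' \<in> set Q" using lyp(1) Suc i setQ by auto
        ultimately show ?thesis using i Suc by blast
      qed
    qed
  qed
  have new: "(u,j,z) \<in> Ch4 \<Longrightarrow> (u,j,z) \<notin> Ch \<Longrightarrow> z \<in> Vs4 - Vs \<and>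
      (u \<in> Vs \<longrightarrow> (u = x0 \<and> j = cs!0 \<and> z = Q!1) \<or> (u = y0 \<and> j = cs!(Le-1) \<and> z = Q!(Le-1)))" for u j z
  proof -
    assume a: "(u,j,z) \<in> Ch4" "(u,j,z) \<notin> Ch"
    show ?thesis
    proof (cases "(u,j,z) \<in> Ch3")
      case False
      then show ?thesis using new4 a Vchain yVs2 by blast
    next
      case T3: True
      show ?thesis
      proof (cases "(u,j,z) \<in> Ch2")
        case False
        then have "z \<in> Vs3 - Vs2 \<and> (u \<in> Vs3 - Vs2 \<or> u = x)" using new3 T3 by blast
        then show ?thesis using Vchain xV V4(1) by blast
      next
        case T2: True
        show ?thesis
        proof (cases "(u,j,z) \<in> Ch1")
          case False
          then have "(u,j,z) = (y0, cL, y)" using T2 by (simp add: Ch2_def)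
          moreover have "Q!(Le-1) = y" by (rule QLm)
          ultimately show ?thesis using yVs2 Vchain xy by (auto simp: cL_def)
        next
          case True
          then have "(u,j,z) \<in> Tr1" using a(2) by (simp add: Ch1_def)
          then obtain k where k: "k < p1" "u = (x0#ys1)!k" "j = cs1!k" "z = ys1!k" by (auto simp: Tr1_def)
          have zV: "z \<in> Vs4 - Vs" using k ys1V Vchain lys1 by (metis DiffD1 DiffD2 DiffI nth_mem subsetD)
          have "u \<in> Vs \<Longrightarrow> k = 0"
          proof (rule ccontr)
            assume "u \<in> Vs" "k \<noteq> 0"
            then obtain k' where "k = Suc k'" by (cases k) auto
            then have "u \<in> set ys1" using k lys1 by simp
            then show False using \<open>u \<in> Vs\<close> Y1(3) by blast
          qed
          moreover have "Q!1 = ys1!0" using Q1[of 1] p1pos by simp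
          ultimately show ?thesis using zV k cs1(5) p1pos by auto
        qed
      qed
    qed
  qed
  define R where "R = (Vs4 - Vs) - set Q"
  have R1: "R \<subseteq> Vs4" "R \<inter> Fb = {}" using FbVs by (auto simp: R_def)
  have down: "\<forall>u j z. (u,j,z) \<in> Ch4 \<longrightarrow> u \<in> R \<longrightarrow> z \<in> R"
  proof (intro allI impI)
    fix u j z assume a: "(u,j,z) \<in> Ch4" "u \<in> R"
    have "u \<notin> Vs" using a(2) by (simp add: R_def)
    hence nCh: "(u,j,z) \<notin> Ch" using GS_tr[OF gs] by blast
    hence zV: "z \<in> Vs4 - Vs" using new[OF a(1)] by blast
    show "z \<in> R"
    proof (rule ccontr)
      assume "z \<notin> R"
      hence "z \<in> set Q" using zV by (simp add: R_def)
      then obtain p j' where "p \<in> set Q" "(p,j',z) \<in> Ch4" using par zV by blast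
      hence "p = u" using GS_uniq[OF gs4 a(1)] by blast
      with \<open>p \<in> set Q\<close> a(2) show False by (simp add: R_def)
    qed
  qed
  define Ch5 where "Ch5 = {(u,j,z). (u,j,z) \<in> Ch4 \<and> z \<notin> R}"
  have gs5: "GS Fb (Vs4 - R) Ch5" unfolding Ch5_def by (rule remove_set[OF gs4 R1 down])
  have VR: "Vs4 - R = Vs \<union> set Q" using QV4 VsV4 by (auto simp: R_def)
  have C5: "Ch \<subseteq> Ch5"
  proof
    fix tr assume "tr \<in> Ch"
    moreover obtain u j z where "tr = (u,j,z)" by (cases tr) auto
    ultimately show "tr \<in> Ch5" using Chain GS_tr[OF gs] by (auto simp: Ch5_def R_def)
  qed
  have N5: "\<forall>u j z. (u,j,z) \<in> Ch5 \<longrightarrow> (u,j,z) \<notin> Ch \<longrightarrow> u \<in> Vs \<longrightarrow>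
        (u = x0 \<and> j = cs!0 \<and> z = Q!1) \<or> (u = y0 \<and> j = cs!(Le-1) \<and> z = Q!(Le-1))"
    using new by (auto simp: Ch5_def)
  show ?thesis
    apply (rule exI[of _ Q], rule exI[of _ Ch5])
    using lQ Q0 Q4 dQ QVs edges gs5 VR C5 N5 by simp
qed

end



lemma pow_facts:
  fixes s D d :: nat
  assumes s: "s \<ge> 1" and D: "D \<ge> 3" and d: "d = nat \<lceil>ln (real s) / ln (real D - 1)\<rceil>"
  shows "s \<le> (D-1)^d" and "d \<ge> 1 \<Longrightarrow> (D-1)^(d-1) < s"
proof -
  define q where "q = ln (real s) / ln (real D - 1)"
  have lnD: "ln (real D - 1) > 0" using D by simp
  have q0: "q \<ge> 0" using s lnD by (simp add: q_def)
  have dq: "real d = of_int \<lceil>q\<rceil>" using q0 d by (simp add: q_def)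
  have Dr: "real (D - 1) = real D - 1" using D by simp
  have "q \<le> real d" using dq by (simp add: le_of_int_ceiling)
  hence "ln (real s) \<le> real d * ln (real D - 1)" using lnD by (simp add: q_def divide_le_eq)
  also have "\<dots> = ln ((real D - 1) ^ d)" using D by (simp add: ln_realpow)
  finally have "real s \<le> (real D - 1) ^ d" using s D by (subst (asm) ln_le_cancel_iff) auto
  then show "s \<le> (D-1)^d" using Dr by (metis of_nat_le_iff of_nat_power)
  assume d1: "d \<ge> 1"
  have "real (d - 1) < q" using dq d1 ceiling_correct[of q] by (simp add: of_nat_diff)
  hence "real (d - 1) * ln (real D - 1) < ln (real s)" using lnD by (simp add: q_def pos_less_divide_eq)
  hence "ln ((real D - 1) ^ (d-1)) < ln (real s)" using D by (simp add: ln_realpow)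
  hence "(real D - 1) ^ (d-1) < real s" using s D by (subst (asm) ln_less_cancel_iff) auto
  then show "(D-1)^(d-1) < s" using Dr by (metis of_nat_less_iff of_nat_power)
qed

context base begin

lemma T_geom: "(D-2) * T n + (D-1) = (D-1)^(Suc n)"
proof (induction n)
  case 0 then show ?case by (simp add: T_def)
next
  case (Suc n)
  have "(D-2) * T (Suc n) + (D-1) = ((D-2) * T n + (D-1)) + (D-2) * (D-1)^(Suc n)"
    by (simp add: T_Suc algebra_simps)
  also have "\<dots> = (D-1)^(Suc n) + (D-2) * (D-1)^(Suc n)" using Suc by simp
  also have "\<dots> = (1 + (D-2)) * (D-1)^(Suc n)" by (simp only: distrib_right mult_1_left)
  also have "1 + (D-2) = D-1" using D3 by simp
  finally show ?case by simp
qed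

lemma T_bound:
  assumes "d = 0 \<or> (D-1)^(d-1) < s"
  shows "T d \<le> (D+1)*(s-1)"
proof (cases "d = 0")
  case True then show ?thesis by (simp add: T_def)
next
  case False
  then obtain d' where d': "d = Suc d'" by (cases d) auto
  have lt: "(D-1)^d' \<le> s - 1" using assms False d' by simp
  have "(D-2) * T d \<le> (D-1)^(Suc d)" using T_geom[of d] by linarith
  also have "(D-1)^(Suc d) = (D-1)^2 * (D-1)^d'" by (simp add: d' power2_eq_square)
  also have "\<dots> \<le> (D-1)^2 * (s-1)" using lt by simp
  also have "(D-1)^2 \<le> (D-2)*(D+1)"
  proof -
    obtain e where e: "D = e + 3" using D3 by (metis add.commute le_iff_add)
    show ?thesis unfolding e by (simp add: power2_eq_square algebra_simps)
  qed
  hence "(D-1)^2 * (s-1) \<le> (D-2)*(D+1)*(s-1)" by simp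
  finally have "(D-2) * T d \<le> (D-2) * (D+1) * (s-1)" .
  hence "(D-2) * T d \<le> (D-2) * ((D+1) * (s-1))" by (simp only: mult.assoc)
  moreover have "D - 2 > 0" using D3 by simp
  ultimately show ?thesis by (meson mult_le_cancel1 not_less0 less_imp_not_less)
qed

end



locale emb = base V t E s D for V :: "'v set" and t E s D +
  fixes Fb :: "'v set" and B :: "'h set" and P :: "'h \<Rightarrow> 'h \<Rightarrow> 'h list" and c :: "'h set \<Rightarrow> nat"
    and ph :: "'h \<Rightarrow> 'v" and d :: nat and VH :: "'h set"
  assumes GS0: "GS Fb (Fb \<union> ph ` B) {}"
    and phinj: "inj_on ph B" and phV: "ph ` B \<subseteq> V - Fb"
    and cFb: "card Fb < s"
    and finB: "finite B" and cB: "card B = D" and BVH: "B \<subseteq> VH" and finVH: "finite VH"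
    and paths: "\<And>a b. a \<in> B \<Longrightarrow> b \<in> B \<Longrightarrow> a \<noteq> b \<Longrightarrow>
            P b a = rev (P a b) \<and> P a b \<noteq> [] \<and> hd (P a b) = a \<and> last (P a b) = b \<and>
            distinct (P a b) \<and> length (P a b) \<ge> 2*d + 4 \<and> (set (P a b) - {a, b}) \<inter> B = {}"
    and pdisj: "\<And>a b a' b'. a \<in> B \<Longrightarrow> b \<in> B \<Longrightarrow> a' \<in> B \<Longrightarrow> b' \<in> B \<Longrightarrow> a \<noteq> b \<Longrightarrow> a' \<noteq> b' \<Longrightarrow>
            {a, b} \<noteq> {a', b'} \<Longrightarrow> (set (P a b) - {a, b}) \<inter> (set (P a' b') - {a', b'}) = {}"
    and pVH: "\<And>a b. a \<in> B \<Longrightarrow> b \<in> B \<Longrightarrow> a \<noteq> b \<Longrightarrow> set (P a b) \<subseteq> VH"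
    and pcol: "\<And>a b k. a \<in> B \<Longrightarrow> b \<in> B \<Longrightarrow> a \<noteq> b \<Longrightarrow> Suc k < length (P a b) \<Longrightarrow>
            c {P a b ! k, P a b ! Suc k} \<in> {1..t}"
    and sd: "s \<le> (D-1)^d"
    and budget: "card VH + (s - 1) + 2 * T d + (2*D-1)*s \<le> card V"
begin

definition Eset :: "'h set set" where
  "Eset = {{a, b} | a b. a \<in> B \<and> b \<in> B \<and> a \<noteq> b}"

definition orr :: "'h set \<Rightarrow> 'h \<times> 'h" where
  "orr e = (SOME ab. fst ab \<in> B \<and> snd ab \<in> B \<and> fst ab \<noteq> snd ab \<and> e = {fst ab, snd ab})"

definition o1 :: "'h set \<Rightarrow> 'h" where "o1 e = fst (orr e)"
definition o2 :: "'h set \<Rightarrow> 'h" where "o2 e = snd (orr e)"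
definition PE :: "'h set \<Rightarrow> 'h list" where "PE e = P (o1 e) (o2 e)"

lemma orr_prop:
  assumes "e \<in> Eset"
  shows "o1 e \<in> B \<and> o2 e \<in> B \<and> o1 e \<noteq> o2 e \<and> e = {o1 e, o2 e}"
proof -
  obtain a b where "a \<in> B" "b \<in> B" "a \<noteq> b" "e = {a,b}" using assms by (auto simp: Eset_def)
  then have "\<exists>ab. fst ab \<in> B \<and> snd ab \<in> B \<and> fst ab \<noteq> snd ab \<and> e = {fst ab, snd ab}"
    by (intro exI[of _ "(a,b)"]) simp
  then have "fst (orr e) \<in> B \<and> snd (orr e) \<in> B \<and> fst (orr e) \<noteq> snd (orr e) \<and> e = {fst (orr e), snd (orr e)}"
    unfolding orr_def by (rule someI_ex)
  then show ?thesis by (simp add: o1_def o2_def)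
qed

lemma finEset: "finite Eset"
proof -
  have "Eset \<subseteq> Pow B" by (auto simp: Eset_def)
  then show ?thesis using finB by (meson finite_Pow_iff finite_subset)
qed

definition goodQ :: "'h set \<Rightarrow> 'v list \<Rightarrow> bool" where
  "goodQ e Q \<longleftrightarrow> length Q = length (PE e) \<and> Q!0 = ph (o1 e) \<and> Q!(length (PE e) - 1) = ph (o2 e) \<and>
     distinct Q \<and> (\<forall>k. Suc k < length (PE e) \<longrightarrow> {Q!k, Q!Suc k} \<in> E (c {PE e!k, PE e!Suc k}))"

definition W :: "'h set set \<Rightarrow> 'h set" where
  "W S = B \<union> (\<Union>e\<in>S. set (PE e))"

definition INV :: "'h set set \<Rightarrow> 'v set \<Rightarrow> ('v \<times> nat \<times> 'v) set \<Rightarrow> ('h set \<Rightarrow> 'v list) \<Rightarrow> bool" where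
  "INV S Vs Ch Qf \<longleftrightarrow> GS Fb Vs Ch \<and> Vs = Fb \<union> ph ` B \<union> (\<Union>e\<in>S. set (Qf e)) \<and>
     card Vs \<le> card Fb + card (W S) \<and> (\<forall>e\<in>S. goodQ e (Qf e)) \<and>
     (\<forall>e\<in>S. set (Qf e) \<inter> (Fb \<union> ph ` B) = {ph (o1 e), ph (o2 e)}) \<and>
     (\<forall>e\<in>S. \<forall>e'\<in>S. e \<noteq> e' \<longrightarrow> set (Qf e) \<inter> set (Qf e') \<subseteq> ph ` B) \<and>
     (\<forall>a\<in>B. \<forall>j. card {y. (ph a, j, y) \<in> Ch} \<le> card {e\<in>S. a \<in> e})"

lemma INV_empty: "INV {} (Fb \<union> ph ` B) {} Qf"
proof -
  have "card (Fb \<union> ph ` B) \<le> card Fb + card (ph ` B)" by (rule card_Un_le)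
  also have "card (ph ` B) \<le> card B" using finB by (rule card_image_le)
  finally have "card (Fb \<union> ph ` B) \<le> card Fb + card (W {})" by (simp add: W_def)
  then show ?thesis using GS0 by (simp add: INV_def)
qed

lemma incident_card:
  assumes S: "S \<subseteq> Eset" and e: "e \<in> Eset" "e \<notin> S" and a: "a \<in> e"
  shows "card {e'\<in>S. a \<in> e'} \<le> D - 2"
proof -
  obtain b where ab: "a \<in> B" "b \<in> B" "a \<noteq> b" "e = {a,b}"
    using e(1) a by (auto simp: Eset_def)
  have "{e'\<in>S. a \<in> e'} \<subseteq> (\<lambda>b'. {a,b'}) ` (B - {a,b})"
  proof
    fix e' assume "e' \<in> {e'\<in>S. a \<in> e'}"
    then have e': "e' \<in> Eset" "a \<in> e'" "e' \<noteq> e" using S e(2) by auto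
    then obtain x y where xy: "x \<in> B" "y \<in> B" "x \<noteq> y" "e' = {x,y}" by (auto simp: Eset_def)
    define b' where "b' = (if x = a then y else x)"
    have "e' = {a, b'}" "b' \<in> B" "b' \<noteq> a" using xy e'(2) by (auto simp: b'_def)
    moreover then have "b' \<noteq> b" using e'(3) ab(4) by auto
    ultimately show "e' \<in> (\<lambda>b'. {a,b'}) ` (B - {a,b})" by blast
  qed
  hence "card {e'\<in>S. a \<in> e'} \<le> card ((\<lambda>b'. {a,b'}) ` (B - {a,b}))"
    by (rule card_mono[rotated]) (use finB in auto)
  also have "\<dots> \<le> card (B - {a,b})" by (rule card_image_le) (use finB in auto)
  also have "\<dots> = D - 2" using ab finB cB by (simp add: card_Diff_subset)
  finally show ?thesis .
qed

end



context emb begin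

lemma pths:
  assumes "a \<in> B" "b \<in> B" "a \<noteq> b"
  shows "P b a = rev (P a b)" "P a b \<noteq> []" "hd (P a b) = a" "last (P a b) = b"
    "distinct (P a b)" "length (P a b) \<ge> 2*d + 4" "(set (P a b) - {a, b}) \<inter> B = {}"
proof -
  note p = paths[OF assms]
  show "P b a = rev (P a b)" by (rule conjunct1[OF p])
  show "P a b \<noteq> []" by (rule conjunct1[OF conjunct2[OF p]])
  show "hd (P a b) = a" by (rule conjunct1[OF conjunct2[OF conjunct2[OF p]]])
  show "last (P a b) = b" by (rule conjunct1[OF conjunct2[OF conjunct2[OF conjunct2[OF p]]]])
  show "distinct (P a b)" by (rule conjunct1[OF conjunct2[OF conjunct2[OF conjunct2[OF conjunct2[OF p]]]]])
  show "length (P a b) \<ge> 2*d + 4" by (rule conjunct1[OF conjunct2[OF conjunct2[OF conjunct2[OF conjunct2[OF conjunct2[OF p]]]]]])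
  show "(set (P a b) - {a, b}) \<inter> B = {}" by (rule conjunct2[OF conjunct2[OF conjunct2[OF conjunct2[OF conjunct2[OF conjunct2[OF p]]]]]])
qed

lemma int_facts:
  assumes e: "e \<in> Eset"
  shows "card (set (PE e) - {o1 e, o2 e}) = length (PE e) - 2"
    and "(set (PE e) - {o1 e, o2 e}) \<inter> B = {}"
    and "set (PE e) = insert (o1 e) (insert (o2 e) (set (PE e) - {o1 e, o2 e}))"
proof -
  have o: "o1 e \<in> B" "o2 e \<in> B" "o1 e \<noteq> o2 e" using orr_prop[OF e] by auto
  have p: "PE e \<noteq> []" "hd (PE e) = o1 e" "last (PE e) = o2 e" "distinct (PE e)"
    "(set (PE e) - {o1 e, o2 e}) \<inter> B = {}" unfolding PE_def using pths[OF o] by auto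
  have in1: "o1 e \<in> set (PE e)" using p by (metis list.set_sel(1))
  have in2: "o2 e \<in> set (PE e)" using p by (metis last_in_set)
  have "card (set (PE e) - {o1 e, o2 e}) = card (set (PE e)) - card {o1 e, o2 e}"
    by (rule card_Diff_subset) (use in1 in2 in auto)
  then show "card (set (PE e) - {o1 e, o2 e}) = length (PE e) - 2"
    using distinct_card[OF p(4)] o(3) by simp
  show "(set (PE e) - {o1 e, o2 e}) \<inter> B = {}" by (rule p(5))
  show "set (PE e) = insert (o1 e) (insert (o2 e) (set (PE e) - {o1 e, o2 e}))" using in1 in2 by blast
qed

lemma int_disj_W:
  assumes S: "S \<subseteq> Eset" and e: "e \<in> Eset" "e \<notin> S"
  shows "(set (PE e) - {o1 e, o2 e}) \<inter> W S = {}"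
proof -
  have o: "o1 e \<in> B" "o2 e \<in> B" "o1 e \<noteq> o2 e" "e = {o1 e, o2 e}" using orr_prop[OF e(1)] by auto
  have nb: "(set (PE e) - {o1 e, o2 e}) \<inter> B = {}" by (rule int_facts(2)[OF e(1)])
  have "(set (PE e) - {o1 e, o2 e}) \<inter> set (PE e') = {}" if e': "e' \<in> S" for e'
  proof -
    have e'E: "e' \<in> Eset" using S e' by blast
    have o': "o1 e' \<in> B" "o2 e' \<in> B" "o1 e' \<noteq> o2 e'" "e' = {o1 e', o2 e'}" using orr_prop[OF e'E] by auto
    have "{o1 e, o2 e} \<noteq> {o1 e', o2 e'}" using o(4) o'(4) e(2) e' by metis
    then have "(set (PE e) - {o1 e, o2 e}) \<inter> (set (PE e') - {o1 e', o2 e'}) = {}"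
      unfolding PE_def by (rule pdisj[OF o(1,2) o'(1,2) o(3) o'(3)])
    moreover have "(set (PE e) - {o1 e, o2 e}) \<inter> {o1 e', o2 e'} = {}" using nb o' by blast
    ultimately show ?thesis by blast
  qed
  then show ?thesis using nb by (auto simp: W_def)
qed

lemma W_sub: "S \<subseteq> Eset \<Longrightarrow> W S \<subseteq> VH"
proof -
  assume S: "S \<subseteq> Eset"
  have "set (PE e) \<subseteq> VH" if "e \<in> S" for e
  proof -
    have "e \<in> Eset" using S that by blast
    then show ?thesis using orr_prop pVH by (simp add: PE_def)
  qed
  then show ?thesis using BVH by (auto simp: W_def)
qed

lemma step:
  assumes inv: "INV S Vs Ch Qf" and S: "S \<subseteq> Eset" and e: "e \<in> Eset" "e \<notin> S"
  shows "\<exists>Vs' Ch' Qf'. INV (insert e S) Vs' Ch' Qf'"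
proof -
  define a where "a = o1 e"
  define b where "b = o2 e"
  define L where "L = length (PE e)"
  define Le where "Le = L - 1"
  have o: "a \<in> B" "b \<in> B" "a \<noteq> b" "e = {a, b}" using orr_prop[OF e(1)] by (auto simp: a_def b_def)
  have PEab: "PE e = P a b" unfolding PE_def a_def b_def ..
  have pth: "PE e \<noteq> []" "hd (PE e) = a" "last (PE e) = b" "distinct (PE e)" "L \<ge> 2*d + 4"
    unfolding PEab L_def using pths[OF o(1-3)] by auto
  have gs: "GS Fb Vs Ch" and VsE: "Vs = Fb \<union> ph ` B \<union> (\<Union>e\<in>S. set (Qf e))"
    and cVs: "card Vs \<le> card Fb + card (W S)" and gQ: "\<forall>e\<in>S. goodQ e (Qf e)"
    and iQ: "\<forall>e\<in>S. set (Qf e) \<inter> (Fb \<union> ph ` B) = {ph (o1 e), ph (o2 e)}"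
    and dQ: "\<forall>e\<in>S. \<forall>e'\<in>S. e \<noteq> e' \<longrightarrow> set (Qf e) \<inter> set (Qf e') \<subseteq> ph ` B"
    and chc: "\<forall>a\<in>B. \<forall>j. card {y. (ph a, j, y) \<in> Ch} \<le> card {e\<in>S. a \<in> e}"
  proof -
    note i = inv[unfolded INV_def]
    show "GS Fb Vs Ch" by (rule conjunct1[OF i])
    show "Vs = Fb \<union> ph ` B \<union> (\<Union>e\<in>S. set (Qf e))" by (rule conjunct1[OF conjunct2[OF i]])
    show "card Vs \<le> card Fb + card (W S)" by (rule conjunct1[OF conjunct2[OF conjunct2[OF i]]])
    show "\<forall>e\<in>S. goodQ e (Qf e)" by (rule conjunct1[OF conjunct2[OF conjunct2[OF conjunct2[OF i]]]])
    show "\<forall>e\<in>S. set (Qf e) \<inter> (Fb \<union> ph ` B) = {ph (o1 e), ph (o2 e)}"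
      by (rule conjunct1[OF conjunct2[OF conjunct2[OF conjunct2[OF conjunct2[OF i]]]]])
    show "\<forall>e\<in>S. \<forall>e'\<in>S. e \<noteq> e' \<longrightarrow> set (Qf e) \<inter> set (Qf e') \<subseteq> ph ` B"
      by (rule conjunct1[OF conjunct2[OF conjunct2[OF conjunct2[OF conjunct2[OF conjunct2[OF i]]]]]])
    show "\<forall>a\<in>B. \<forall>j. card {y. (ph a, j, y) \<in> Ch} \<le> card {e\<in>S. a \<in> e}"
      by (rule conjunct2[OF conjunct2[OF conjunct2[OF conjunct2[OF conjunct2[OF conjunct2[OF i]]]]]])
  qed
  define x0 where "x0 = ph a"
  define y0 where "y0 = ph b"
  have x0: "x0 \<in> Vs" "x0 \<notin> Fb" using o(1) phV VsE by (auto simp: x0_def)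
  have y0: "y0 \<in> Vs" "y0 \<notin> Fb" using o(2) phV VsE by (auto simp: y0_def)
  have xy: "x0 \<noteq> y0" using phinj o by (auto simp: x0_def y0_def inj_on_def)
  define cs where "cs = map (\<lambda>k. c {PE e!k, PE e!Suc k}) [0..<Le]"
  have lcs: "length cs = Le" by (simp add: cs_def)
  have Le2: "2*d+3 \<le> Le" using pth(5) by (simp add: Le_def)
  have csk: "k < Le \<Longrightarrow> cs!k = c {PE e!k, PE e!Suc k}" for k by (simp add: cs_def)
  have css: "set cs \<subseteq> {1..t}"
  proof
    fix x assume "x \<in> set cs"
    then obtain k where k: "k < Le" "x = cs!k" using lcs by (metis in_set_conv_nth)
    have "Suc k < length (P a b)" using k(1) pth(5) unfolding Le_def L_def PEab by linarith
    then have "c {P a b ! k, P a b ! Suc k} \<in> {1..t}" by (rule pcol[OF o(1-3)])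
    then show "x \<in> {1..t}" using k csk unfolding PEab by simp
  qed
  have ch_le: "card {y. (ph a', j, y) \<in> Ch} \<le> D - 2" if "a' \<in> e" for a' j
  proof -
    have "a' \<in> B" using that o by auto
    then have "card {y. (ph a', j, y) \<in> Ch} \<le> card {e\<in>S. a' \<in> e}" using chc by blast
    also have "\<dots> \<le> D - 2" by (rule incident_card[OF S e that])
    finally show ?thesis .
  qed
  have dx: "dem Fb Ch (x0, cs!0) \<ge> 1"
  proof -
    have "card {y. (x0, cs!0, y) \<in> Ch} \<le> D - 2" using ch_le[of a] o by (simp add: x0_def)
    then show ?thesis using x0(2) D3 by (simp add: dem_def)
  qed
  have dy: "dem Fb Ch (y0, cs!(Le-1)) \<ge> 1"
  proof -
    have "card {y. (y0, cs!(Le-1), y) \<in> Ch} \<le> D - 2" using ch_le[of b] o by (simp add: y0_def)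
    then show ?thesis using y0(2) D3 by (simp add: dem_def)
  qed
  have IF: "set (PE e) = insert a (insert b (set (PE e) - {a, b}))"
    using int_facts(3)[OF e(1)] unfolding a_def b_def .
  have "W (insert e S) = W S \<union> set (PE e)" unfolding W_def by blast
  also have "\<dots> = W S \<union> (set (PE e) - {a, b})" using IF o(1,2) unfolding W_def by blast
  finally have WI: "W (insert e S) = W S \<union> (set (PE e) - {a, b})" .
  have cint: "card (set (PE e) - {a, b}) = Le - 1" using int_facts(1)[OF e(1)] by (simp add: a_def b_def Le_def L_def)
  have finW: "finite (W S)" using W_sub[OF S] finVH finite_subset by metis
  have cWI: "card (W (insert e S)) = card (W S) + (Le - 1)"
  proof -
    have "card (W S \<union> (set (PE e) - {a, b})) = card (W S) + card (set (PE e) - {a, b})"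
      by (rule card_Un_disjoint[OF finW]) (use int_disj_W[OF S e] in \<open>simp_all add: a_def b_def Int_commute\<close>)
    then show ?thesis using WI cint by simp
  qed
  have S': "insert e S \<subseteq> Eset" using S e by blast
  have "card (W (insert e S)) \<le> card VH" by (rule card_mono[OF finVH W_sub[OF S']])
  hence bud: "card Vs + (Le - 1) + 2 * T d + (2*D-1)*s \<le> card V"
    using cVs cWI budget cFb by linarith
  obtain Q Ch' where Q: "length Q = Suc Le" "Q!0 = x0" "Q!Le = y0" "distinct Q" "set Q \<inter> Vs = {x0,y0}"
    and Qe: "\<forall>k<Le. {Q!k, Q!Suc k} \<in> E (cs!k)" and gs': "GS Fb (Vs \<union> set Q) Ch'" and CC: "Ch \<subseteq> Ch'"
    and newt: "\<forall>u j y. (u,j,y) \<in> Ch' \<longrightarrow> (u,j,y) \<notin> Ch \<longrightarrow> u \<in> Vs \<longrightarrow>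
        (u = x0 \<and> j = cs!0 \<and> y = Q!1) \<or> (u = y0 \<and> j = cs!(Le-1) \<and> y = Q!(Le-1))"
    using connect[OF gs x0 y0 xy lcs Le2 css sd dx dy bud] by blast
  define Qf' where "Qf' = Qf(e := Q)"
  have Qf'S: "e' \<in> S \<Longrightarrow> Qf' e' = Qf e'" for e' using e(2) by (auto simp: Qf'_def)
  have Qf'e: "Qf' e = Q" by (simp add: Qf'_def)
  have I2: "Vs \<union> set Q = Fb \<union> ph ` B \<union> (\<Union>e'\<in>insert e S. set (Qf' e'))"
    using VsE Qf'S Qf'e by auto
  have finVs: "finite Vs" by (rule GS_finVs[OF gs])
  have I3: "card (Vs \<union> set Q) \<le> card Fb + card (W (insert e S))"
  proof -
    have "card (Vs \<union> set Q) = card Vs + card (set Q - Vs)"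
    proof -
      have "Vs \<union> set Q = Vs \<union> (set Q - Vs)" by blast
      then show ?thesis using card_Un_disjoint[OF finVs, of "set Q - Vs"] by auto
    qed
    moreover have "card (set Q - Vs) = Le - 1"
    proof -
      have "set Q - Vs = set Q - {x0, y0}" using Q(5) by blast
      moreover have "card (set Q - {x0,y0}) = card (set Q) - card {x0,y0}"
        by (rule card_Diff_subset) (use Q(5) in auto)
      ultimately show ?thesis using distinct_card[OF Q(4)] Q(1) xy by simp
    qed
    ultimately show ?thesis using cVs cWI by linarith
  qed
  have I4: "goodQ e Q"
  proof -
    have "length Q = length (PE e)" using Q(1) pth(5) by (simp add: Le_def L_def)
    moreover have "Q!(length (PE e) - 1) = ph (o2 e)" using Q(3) by (simp add: Le_def L_def y0_def b_def)
    moreover have "Q!0 = ph (o1 e)" using Q(2) by (simp add: x0_def a_def)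
    moreover have "\<forall>k. Suc k < length (PE e) \<longrightarrow> {Q!k, Q!Suc k} \<in> E (c {PE e!k, PE e!Suc k})"
      using Qe csk by (simp add: Le_def L_def)
    ultimately show ?thesis using Q(4) by (simp add: goodQ_def)
  qed
  have base_sub: "Fb \<union> ph ` B \<subseteq> Vs" using VsE by blast
  have x0B: "x0 \<in> ph ` B" "y0 \<in> ph ` B" using o by (auto simp: x0_def y0_def)
  have I5: "set Q \<inter> (Fb \<union> ph ` B) = {ph (o1 e), ph (o2 e)}"
  proof -
    have "set Q \<inter> (Fb \<union> ph ` B) \<subseteq> {x0, y0}" using Q(5) base_sub by blast
    moreover have "x0 \<in> set Q" "y0 \<in> set Q" using Q(5) by auto
    ultimately show ?thesis using x0B by (auto simp: x0_def y0_def a_def b_def)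
  qed
  have QsubVs: "e' \<in> S \<Longrightarrow> set (Qf e') \<subseteq> Vs" for e' using VsE by blast
  have I6: "\<forall>e1\<in>insert e S. \<forall>e2\<in>insert e S. e1 \<noteq> e2 \<longrightarrow> set (Qf' e1) \<inter> set (Qf' e2) \<subseteq> ph ` B"
  proof (intro ballI impI)
    fix e1 e2 assume a12: "e1 \<in> insert e S" "e2 \<in> insert e S" "e1 \<noteq> e2"
    show "set (Qf' e1) \<inter> set (Qf' e2) \<subseteq> ph ` B"
    proof (cases "e1 = e")
      case True
      then have e2S: "e2 \<in> S" using a12 by auto
      have h1: "Qf' e1 = Q" using True Qf'e by simp
      have h2: "Qf' e2 = Qf e2" by (rule Qf'S[OF e2S])
      have "set (Qf' e1) \<inter> set (Qf' e2) \<subseteq> set Q \<inter> Vs" unfolding h1 h2 using QsubVs[OF e2S] by blast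
      then show ?thesis using Q(5) x0B by auto
    next
      case False
      show ?thesis
      proof (cases "e2 = e")
        case True
        then have e1S: "e1 \<in> S" using a12 False by auto
        have h1: "Qf' e2 = Q" using True Qf'e by simp
        have h2: "Qf' e1 = Qf e1" by (rule Qf'S[OF e1S])
        have "set (Qf' e1) \<inter> set (Qf' e2) \<subseteq> set Q \<inter> Vs" unfolding h1 h2 using QsubVs[OF e1S] by blast
        then show ?thesis using Q(5) x0B by auto
      next
        case False
        then have e12: "e1 \<in> S" "e2 \<in> S" using \<open>e1 \<noteq> e\<close> a12 by auto
        then show ?thesis using a12(3) dQ Qf'S[OF e12(1)] Qf'S[OF e12(2)] by metis
      qed
    qed
  qed
  have I7: "\<forall>a'\<in>B. \<forall>j. card {y. (ph a', j, y) \<in> Ch'} \<le> card {e'\<in>insert e S. a' \<in> e'}"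
  proof (intro ballI allI)
    fix a' j assume a': "a' \<in> B"
    have finS: "finite S" using S finEset finite_subset by metis
    have cnt: "card {e'\<in>insert e S. a' \<in> e'} = card {e'\<in>S. a' \<in> e'} + (if a' \<in> e then 1 else 0)"
    proof (cases "a' \<in> e")
      case True
      then have "{e'\<in>insert e S. a' \<in> e'} = insert e {e'\<in>S. a' \<in> e'}" by auto
      then show ?thesis using True e(2) finS by simp
    next
      case False
      then have "{e'\<in>insert e S. a' \<in> e'} = {e'\<in>S. a' \<in> e'}" by auto
      then show ?thesis using False by simp
    qed
    have old: "card {y. (ph a', j, y) \<in> Ch} \<le> card {e'\<in>S. a' \<in> e'}" using chc a' by blast
    have phVs: "ph a' \<in> Vs" using a' VsE by blast
    have finold: "finite {y. (ph a', j, y) \<in> Ch}" by (rule GS_finch[OF gs])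
    show "card {y. (ph a', j, y) \<in> Ch'} \<le> card {e'\<in>insert e S. a' \<in> e'}"
    proof (cases "a' \<in> e")
      case False
      then have "ph a' \<noteq> x0" "ph a' \<noteq> y0" using phinj a' o by (auto simp: x0_def y0_def inj_on_def)
      then have "{y. (ph a', j, y) \<in> Ch'} \<subseteq> {y. (ph a', j, y) \<in> Ch}" using newt phVs by blast
      then have "card {y. (ph a', j, y) \<in> Ch'} \<le> card {y. (ph a', j, y) \<in> Ch}"
        by (rule card_mono[OF finold])
      then show ?thesis using old cnt False by simp
    next
      case True
      have "{y. (ph a', j, y) \<in> Ch'} \<subseteq> insert (if a' = a then Q!1 else Q!(Le-1)) {y. (ph a', j, y) \<in> Ch}"
      proof
        fix y assume y: "y \<in> {y. (ph a', j, y) \<in> Ch'}"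
        show "y \<in> insert (if a' = a then Q!1 else Q!(Le-1)) {y. (ph a', j, y) \<in> Ch}"
        proof (cases "(ph a', j, y) \<in> Ch")
          case True then show ?thesis by simp
        next
          case False
          then have "(ph a' = x0 \<and> j = cs!0 \<and> y = Q!1) \<or> (ph a' = y0 \<and> j = cs!(Le-1) \<and> y = Q!(Le-1))"
            using newt y phVs by blast
          moreover have "ph a' = x0 \<longleftrightarrow> a' = a" using phinj a' o by (auto simp: x0_def inj_on_def)
          moreover have "ph a' = y0 \<longleftrightarrow> a' = b" using phinj a' o by (auto simp: y0_def inj_on_def)
          ultimately show ?thesis using o(3) by auto
        qed
      qed
      then have "card {y. (ph a', j, y) \<in> Ch'} \<le> card (insert (if a' = a then Q!1 else Q!(Le-1)) {y. (ph a', j, y) \<in> Ch})"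
        by (rule card_mono[rotated]) (use finold in simp)
      also have "\<dots> \<le> card {y. (ph a', j, y) \<in> Ch} + 1" using finold by (simp add: card_insert_if)
      finally show ?thesis using old cnt True by simp
    qed
  qed
  have "INV (insert e S) (Vs \<union> set Q) Ch' Qf'"
    unfolding INV_def
  proof (intro conjI)
    show "GS Fb (Vs \<union> set Q) Ch'" by (rule gs')
    show "Vs \<union> set Q = Fb \<union> ph ` B \<union> (\<Union>e'\<in>insert e S. set (Qf' e'))" by (rule I2)
    show "card (Vs \<union> set Q) \<le> card Fb + card (W (insert e S))" by (rule I3)
    show "\<forall>e'\<in>insert e S. goodQ e' (Qf' e')" using gQ Qf'S Qf'e I4 by auto
    show "\<forall>e'\<in>insert e S. set (Qf' e') \<inter> (Fb \<union> ph ` B) = {ph (o1 e'), ph (o2 e')}"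
      using iQ Qf'S Qf'e I5 by auto
    show "\<forall>e1\<in>insert e S. \<forall>e2\<in>insert e S. e1 \<noteq> e2 \<longrightarrow> set (Qf' e1) \<inter> set (Qf' e2) \<subseteq> ph ` B" by (rule I6)
    show "\<forall>a\<in>B. \<forall>j. card {y. (ph a, j, y) \<in> Ch'} \<le> card {e'\<in>insert e S. a \<in> e'}" by (rule I7)
  qed
  then show ?thesis by blast
qed

lemma all_inv: "\<exists>Vs Ch Qf. INV Eset Vs Ch Qf"
proof -
  have "finite S \<Longrightarrow> S \<subseteq> Eset \<Longrightarrow> \<exists>Vs Ch Qf. INV S Vs Ch Qf" for S
  proof (induction S rule: finite_induct)
    case empty then show ?case using INV_empty by blast
  next
    case (insert e S)
    then obtain Vs Ch Qf where "INV S Vs Ch Qf" by blast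
    then show ?case using step[of S Vs Ch Qf e] insert by blast
  qed
  then show ?thesis using finEset by blast
qed

end



context emb begin

lemma orient:
  assumes "a \<in> B" "b \<in> B" "a \<noteq> b"
  shows "{a,b} \<in> Eset" and "(o1 {a,b} = a \<and> o2 {a,b} = b) \<or> (o1 {a,b} = b \<and> o2 {a,b} = a)"
proof -
  show E: "{a,b} \<in> Eset" using assms by (auto simp: Eset_def)
  have "{a,b} = {o1 {a,b}, o2 {a,b}}" "o1 {a,b} \<noteq> o2 {a,b}" using orr_prop[OF E] by auto
  then show "(o1 {a,b} = a \<and> o2 {a,b} = b) \<or> (o1 {a,b} = b \<and> o2 {a,b} = a)"
    by (metis doubleton_eq_iff)
qed

lemma embed:
  assumes VHe: "VH = B \<union> (\<Union>a\<in>B. \<Union>b\<in>B - {a}. set (P a b))"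
    and EHe: "EH = (\<Union>a\<in>B. \<Union>b\<in>B - {a}. path_edges (P a b))"
  shows "\<exists>\<phi>. inj_on \<phi> VH \<and> \<phi> ` VH \<subseteq> V \<and> (\<forall>e\<in>EH. \<phi> ` e \<in> E (c e))"
proof -
  obtain Vs Ch Qf where inv: "INV Eset Vs Ch Qf" using all_inv by blast
  note i = inv[unfolded INV_def]
  have gs: "GS Fb Vs Ch" by (rule conjunct1[OF i])
  have VsE: "Vs = Fb \<union> ph ` B \<union> (\<Union>e\<in>Eset. set (Qf e))" by (rule conjunct1[OF conjunct2[OF i]])
  have gQ: "\<forall>e\<in>Eset. goodQ e (Qf e)" by (rule conjunct1[OF conjunct2[OF conjunct2[OF conjunct2[OF i]]]])
  have iQ: "\<forall>e\<in>Eset. set (Qf e) \<inter> (Fb \<union> ph ` B) = {ph (o1 e), ph (o2 e)}"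
    by (rule conjunct1[OF conjunct2[OF conjunct2[OF conjunct2[OF conjunct2[OF i]]]]])
  have dQ: "\<forall>e\<in>Eset. \<forall>e'\<in>Eset. e \<noteq> e' \<longrightarrow> set (Qf e) \<inter> set (Qf e') \<subseteq> ph ` B"
    by (rule conjunct1[OF conjunct2[OF conjunct2[OF conjunct2[OF conjunct2[OF conjunct2[OF i]]]]]])
  have VsV: "Vs \<subseteq> V" by (rule GS_VsV[OF gs])
  have QV: "e \<in> Eset \<Longrightarrow> set (Qf e) \<subseteq> V" for e using VsE VsV by blast
  have gq: "length (Qf e) = length (PE e)" "Qf e!0 = ph (o1 e)" "Qf e!(length (PE e) - 1) = ph (o2 e)"
    "distinct (Qf e)" "\<And>k. Suc k < length (PE e) \<Longrightarrow> {Qf e!k, Qf e!Suc k} \<in> E (c {PE e!k, PE e!Suc k})"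
    if "e \<in> Eset" for e using gQ that by (auto simp: goodQ_def)
  have pe: "PE e \<noteq> []" "hd (PE e) = o1 e" "last (PE e) = o2 e" "distinct (PE e)"
    "(set (PE e) - {o1 e, o2 e}) \<inter> B = {}" "o1 e \<in> B" "o2 e \<in> B" "o1 e \<noteq> o2 e" "e = {o1 e, o2 e}"
    if "e \<in> Eset" for e
  proof -
    have o: "o1 e \<in> B" "o2 e \<in> B" "o1 e \<noteq> o2 e" "e = {o1 e, o2 e}" using orr_prop[OF that] by auto
    then show "o1 e \<in> B" "o2 e \<in> B" "o1 e \<noteq> o2 e" "e = {o1 e, o2 e}" by auto
    show "PE e \<noteq> []" "hd (PE e) = o1 e" "last (PE e) = o2 e" "distinct (PE e)"
      "(set (PE e) - {o1 e, o2 e}) \<inter> B = {}" unfolding PE_def using pths[OF o(1-3)] by auto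
  qed
  have pe0: "PE e ! 0 = o1 e" if "e \<in> Eset" for e using pe[OF that] by (simp add: hd_conv_nth)
  have peL: "PE e ! (length (PE e) - 1) = o2 e" if "e \<in> Eset" for e using pe[OF that] by (simp add: last_conv_nth)
  define phi where "phi h = (if h \<in> B then ph h else (SOME v. \<exists>e\<in>Eset. \<exists>k<length (PE e). PE e ! k = h \<and> v = Qf e ! k))" for h
  have interior_unique: "e = e' \<and> k = k'"
    if "e \<in> Eset" "e' \<in> Eset" "k < length (PE e)" "k' < length (PE e')" "PE e ! k = PE e' ! k'" "PE e ! k \<notin> B" for e e' k k'
  proof -
    let ?h = "PE e ! k"
    have m1: "?h \<in> set (PE e)" using that(3) by (rule nth_mem)
    have m2: "PE e' ! k' \<in> set (PE e')" using that(4) by (rule nth_mem)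
    have nb1: "?h \<notin> {o1 e, o2 e}" using that(6) pe(6,7)[OF that(1)] by auto
    have nb2: "?h \<notin> {o1 e', o2 e'}" using that(6) pe(6,7)[OF that(2)] by auto
    have h1: "?h \<in> set (PE e) - {o1 e, o2 e}" using m1 nb1 by blast
    have h2: "?h \<in> set (PE e') - {o1 e', o2 e'}" using m2 nb2 that(5) by simp
    have "e = e'"
    proof (rule ccontr)
      assume ne: "e \<noteq> e'"
      have "{o1 e, o2 e} \<noteq> {o1 e', o2 e'}" using ne pe(9)[OF that(1)] pe(9)[OF that(2)] by metis
      then have "(set (P (o1 e) (o2 e)) - {o1 e, o2 e}) \<inter> (set (P (o1 e') (o2 e')) - {o1 e', o2 e'}) = {}"
        by (rule pdisj[OF pe(6,7)[OF that(1)] pe(6,7)[OF that(2)] pe(8)[OF that(1)] pe(8)[OF that(2)]])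
      then show False using h1 h2 by (auto simp: PE_def)
    qed
    moreover have "k = k'" using that \<open>e = e'\<close> pe(4)[OF that(1)] by (simp add: nth_eq_iff_index_eq)
    ultimately show ?thesis by simp
  qed
  have phi_at: "phi (PE e ! k) = Qf e ! k" if e: "e \<in> Eset" and k: "k < length (PE e)" for e k
  proof (cases "PE e ! k \<in> B")
    case True
    have "PE e ! k \<in> set (PE e)" using k by simp
    then have "PE e ! k = o1 e \<or> PE e ! k = o2 e" using True pe(5)[OF e] by blast
    then show ?thesis
    proof
      assume h: "PE e ! k = o1 e"
      then have "k = 0" using pe0[OF e] pe(4)[OF e] k pe(1)[OF e] by (metis length_greater_0_conv nth_eq_iff_index_eq)
      then show ?thesis using h True gq(2)[OF e] by (simp add: phi_def)
    next
      assume h: "PE e ! k = o2 e"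
      have "length (PE e) - 1 < length (PE e)" using pe(1)[OF e] by simp
      then have "k = length (PE e) - 1" using h peL[OF e] pe(4)[OF e] k by (metis nth_eq_iff_index_eq)
      then show ?thesis using h True gq(3)[OF e] by (simp add: phi_def)
    qed
  next
    case False
    have "phi (PE e ! k) = (SOME v. \<exists>e'\<in>Eset. \<exists>k'<length (PE e'). PE e' ! k' = PE e ! k \<and> v = Qf e' ! k')"
      using False by (simp add: phi_def)
    also have "\<dots> = Qf e ! k"
    proof (rule some_equality)
      show "\<exists>e'\<in>Eset. \<exists>k'<length (PE e'). PE e' ! k' = PE e ! k \<and> Qf e ! k = Qf e' ! k'" using e k by blast
      fix v assume "\<exists>e'\<in>Eset. \<exists>k'<length (PE e'). PE e' ! k' = PE e ! k \<and> v = Qf e' ! k'"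
      then obtain e' k' where "e' \<in> Eset" "k' < length (PE e')" "PE e' ! k' = PE e ! k" "v = Qf e' ! k'" by blast
      then show "v = Qf e ! k" using interior_unique[OF e \<open>e' \<in> Eset\<close> k] False by metis
    qed
    finally show ?thesis .
  qed
  have cover: "h \<in> B \<or> (\<exists>e\<in>Eset. \<exists>k<length (PE e). PE e ! k = h \<and> h \<notin> B)" if hV: "h \<in> VH" for h
  proof (cases "h \<in> B")
    case True then show ?thesis by simp
  next
    case False
    then obtain a b where ab: "a \<in> B" "b \<in> B" "a \<noteq> b" "h \<in> set (P a b)" using hV VHe by blast
    have E: "{a,b} \<in> Eset" by (rule orient(1)[OF ab(1-3)])
    have "set (PE {a,b}) = set (P a b)"
      using orient(2)[OF ab(1-3)] pths(1)[OF ab(1-3)] by (auto simp: PE_def)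
    then have "h \<in> set (PE {a,b})" using ab(4) by simp
    then obtain k where "k < length (PE {a,b})" "PE {a,b} ! k = h" by (metis in_set_conv_nth)
    then show ?thesis using E False by blast
  qed
  have notB: "Qf e ! k \<notin> ph ` B" if e: "e \<in> Eset" and k: "k < length (PE e)" and nb: "PE e ! k \<notin> B" for e k
  proof
    assume a: "Qf e ! k \<in> ph ` B"
    have "Qf e ! k \<in> set (Qf e)" using k gq(1)[OF e] by simp
    then have "Qf e ! k = ph (o1 e) \<or> Qf e ! k = ph (o2 e)" using a iQ e by blast
    then show False
    proof
      assume "Qf e ! k = ph (o1 e)"
      then have "k = 0" using gq(2,4)[OF e] k gq(1)[OF e] by (metis length_greater_0_conv list.size(3) not_less0 nth_eq_iff_index_eq)
      then show False using nb pe0[OF e] pe(6)[OF e] by simp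
    next
      assume "Qf e ! k = ph (o2 e)"
      have "length (PE e) - 1 < length (Qf e)" using k gq(1)[OF e] by simp
      then have "k = length (PE e) - 1" using \<open>Qf e ! k = ph (o2 e)\<close> gq(3,4)[OF e] k gq(1)[OF e]
        by (metis nth_eq_iff_index_eq)
      then show False using nb peL[OF e] pe(7)[OF e] by simp
    qed
  qed
  have inj: "inj_on phi VH"
  proof (rule inj_onI)
    fix h1 h2 assume h: "h1 \<in> VH" "h2 \<in> VH" "phi h1 = phi h2"
    show "h1 = h2"
    proof (cases "h1 \<in> B")
      case True
      show ?thesis
      proof (cases "h2 \<in> B")
        case True
        then show ?thesis using \<open>h1 \<in> B\<close> h(3) phinj by (simp add: phi_def inj_on_def)
      next
        case False
        then obtain e k where ek: "e \<in> Eset" "k < length (PE e)" "PE e ! k = h2" using cover[OF h(2)] by blast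
        have "phi h2 = Qf e ! k" using phi_at[OF ek(1,2)] ek(3) by simp
        moreover have "phi h1 \<in> ph ` B" using \<open>h1 \<in> B\<close> by (simp add: phi_def)
        ultimately show ?thesis using notB[OF ek(1,2)] ek(3) False h(3) by simp
      qed
    next
      case False
      then obtain e k where ek: "e \<in> Eset" "k < length (PE e)" "PE e ! k = h1" using cover[OF h(1)] by blast
      have v1: "phi h1 = Qf e ! k" using phi_at[OF ek(1,2)] ek(3) by simp
      have n1: "Qf e ! k \<notin> ph ` B" using notB[OF ek(1,2)] ek(3) False by simp
      show ?thesis
      proof (cases "h2 \<in> B")
        case True
        then have "phi h2 \<in> ph ` B" by (simp add: phi_def)
        then show ?thesis using v1 n1 h(3) by simp
      next
        case False
        then obtain e' k' where ek': "e' \<in> Eset" "k' < length (PE e')" "PE e' ! k' = h2" using cover[OF h(2)] by blast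
        have v2: "phi h2 = Qf e' ! k'" using phi_at[OF ek'(1,2)] ek'(3) by simp
        have eq: "Qf e ! k = Qf e' ! k'" using v1 v2 h(3) by simp
        have "e = e'"
        proof (rule ccontr)
          assume "e \<noteq> e'"
          moreover have "Qf e ! k \<in> set (Qf e)" using ek(2) gq(1)[OF ek(1)] by simp
          moreover have "Qf e ! k \<in> set (Qf e')" using eq ek'(2) gq(1)[OF ek'(1)] by simp
          ultimately have "Qf e ! k \<in> ph ` B" using dQ ek(1) ek'(1) by blast
          then show False using n1 by simp
        qed
        then have "k = k'" using eq gq(4)[OF ek(1)] gq(1)[OF ek(1)] ek(2) ek'(2) by (simp add: nth_eq_iff_index_eq)
        then show ?thesis using ek(3) ek'(3) \<open>e = e'\<close> by simp
      qed
    qed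
  qed
  have img: "phi ` VH \<subseteq> V"
  proof
    fix v assume "v \<in> phi ` VH"
    then obtain h where h: "h \<in> VH" "v = phi h" by blast
    show "v \<in> V"
    proof (cases "h \<in> B")
      case True then show ?thesis using h phV by (auto simp: phi_def)
    next
      case False
      then obtain e k where ek: "e \<in> Eset" "k < length (PE e)" "PE e ! k = h" using cover[OF h(1)] by blast
      then have "v = Qf e ! k" using phi_at[OF ek(1,2)] h(2) by simp
      moreover have "Qf e ! k \<in> set (Qf e)" using ek(2) gq(1)[OF ek(1)] by simp
      ultimately show ?thesis using QV[OF ek(1)] by blast
    qed
  qed
  have edges: "\<forall>eh\<in>EH. phi ` eh \<in> E (c eh)"
  proof
    fix eh assume "eh \<in> EH"
    then obtain a b where ab: "a \<in> B" "b \<in> B" "a \<noteq> b" "eh \<in> path_edges (P a b)" using EHe by blast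
    then obtain k where k: "eh = {P a b ! k, P a b ! Suc k}" "Suc k < length (P a b)"
      by (auto simp: path_edges_def)
    have E: "{a,b} \<in> Eset" by (rule orient(1)[OF ab(1-3)])
    consider "o1 {a,b} = a \<and> o2 {a,b} = b" | "o1 {a,b} = b \<and> o2 {a,b} = a" using orient(2)[OF ab(1-3)] by blast
    then show "phi ` eh \<in> E (c eh)"
    proof cases
      case 1
      then have PEe: "PE {a,b} = P a b" by (simp add: PE_def)
      have "phi ` eh = {Qf {a,b} ! k, Qf {a,b} ! Suc k}"
        using k phi_at[OF E, of k] phi_at[OF E, of "Suc k"] PEe by simp
      then show ?thesis using gq(5)[OF E, of k] k PEe by simp
    next
      case 2
      then have PEe: "PE {a,b} = P b a" by (simp add: PE_def)
      have rv: "P a b = rev (P b a)" using pths(1)[OF ab(2) ab(1) ab(3)[symmetric]] .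
      define L where "L = length (P b a)"
      have lL: "length (P a b) = L" using rv by (simp add: L_def)
      define k' where "k' = L - 2 - k"
      have k': "Suc k' < L" "L - Suc k = Suc k'" "L - Suc (Suc k) = k'" using k(2) lL by (auto simp: k'_def)
      have n1: "P a b ! k = P b a ! Suc k'" using rv k(2) lL k' by (simp add: rev_nth L_def)
      have n2: "P a b ! Suc k = P b a ! k'" using rv k(2) lL k' by (simp add: rev_nth L_def)
      have ehe: "eh = {P b a ! k', P b a ! Suc k'}" using k(1) n1 n2 by (simp add: insert_commute)
      have "phi ` eh = {Qf {a,b} ! k', Qf {a,b} ! Suc k'}"
        using ehe phi_at[OF E, of k'] phi_at[OF E, of "Suc k'"] PEe k'(1) by (simp add: L_def)
      then show ?thesis using gq(5)[OF E, of k'] k'(1) PEe ehe by (simp add: L_def)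
    qed
  qed
  show ?thesis using inj img edges by blast
qed

end



lemma arith_budget:
  fixes s D :: nat
  assumes "s \<ge> 1" "D \<ge> 3"
  shows "(s - 1) + 2 * ((D+1)*(s-1)) + (2*D-1)*s \<le> 6*s*D"
proof -
  obtain s' where s': "s = s' + 1" using assms(1) by (metis add.commute le_add_diff_inverse)
  obtain D' where D': "D = D' + 3" using assms(2) by (metis add.commute le_add_diff_inverse)
  show ?thesis unfolding s' D' by (simp add: algebra_simps)
qed

theorem theorem1p4:
  fixes s t D :: nat and V :: "'v set" and E :: "nat \<Rightarrow> 'v set set"
    and VH :: "'h set" and EH :: "'h set set" and c :: "'h set \<Rightarrow> nat"
  assumes "s \<ge> 1" "t \<ge> 1" "D \<ge> 3"
    and "graph_family V t E" and "s_joined s V t E"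
    and "edge_colored_graph t VH EH c"
    and "subdivision_KD D (2 * nat \<lceil>ln (real s) / ln (real D - 1)\<rceil> + 3) VH EH"
    and "max_mon_degree_le t VH EH c D"
    and "int (card VH) \<le> int (card V) - 6 * int s * int D"
  shows "family_contains V E VH EH c"
proof -
  define d where "d = nat \<lceil>ln (real s) / ln (real D - 1)\<rceil>"
  have finV: "finite V" and Esub: "\<forall>i\<in>{1..t}. E i \<subseteq> {e. e \<subseteq> V \<and> card e = 2}"
    using assms(4) by (auto simp: graph_family_def)
  have bs: "base V t E s D" unfolding base_def using finV Esub assms(5) assms(3) assms(1) by blast
  have finVH: "finite VH" and EHsub: "EH \<subseteq> {e. e \<subseteq> VH \<and> card e = 2}" and ccol: "\<forall>e\<in>EH. c e \<in> {1..t}"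
    using assms(6) by (auto simp: edge_colored_graph_def)
  obtain B P where B: "B \<subseteq> VH" "card B = D"
    and pp: "\<forall>a\<in>B. \<forall>b\<in>B. a \<noteq> b \<longrightarrow>
            P b a = rev (P a b) \<and> P a b \<noteq> [] \<and> hd (P a b) = a \<and> last (P a b) = b \<and>
            distinct (P a b) \<and> length (P a b) \<ge> (2 * d + 3) + 1 \<and>
            (set (P a b) - {a, b}) \<inter> B = {}"
    and pd: "\<forall>a\<in>B. \<forall>b\<in>B. \<forall>a'\<in>B. \<forall>b'\<in>B. a \<noteq> b \<and> a' \<noteq> b' \<and> {a, b} \<noteq> {a', b'} \<longrightarrow>
            (set (P a b) - {a, b}) \<inter> (set (P a' b') - {a', b'}) = {}"
    and VHe: "VH = B \<union> (\<Union>a\<in>B. \<Union>b\<in>B - {a}. set (P a b))"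
    and EHe: "EH = (\<Union>a\<in>B. \<Union>b\<in>B - {a}. path_edges (P a b))"
    using assms(7) unfolding subdivision_KD_def d_def by blast
  have finB: "finite B" using B(1) finVH finite_subset by metis
  have cVH: "card VH \<ge> D" using card_mono[OF finVH B(1)] B(2) by simp
  have cV: "card V \<ge> card VH + 6*s*D"
  proof -
    have "int (6*s*D) = 6 * int s * int D" by simp
    then have "int (card VH + 6*s*D) \<le> int (card V)" using assms(9) by linarith
    then show ?thesis by linarith
  qed
  have big: "card V \<ge> (4*D+1)*s + D"
  proof -
    have "(4*D+1)*s \<le> 6*s*D" using assms(3) assms(1) by (simp add: algebra_simps)
    then show ?thesis using cV cVH by linarith
  qed
  obtain Fb where Fb: "Fb \<subseteq> V" "card Fb < s" and GSA: "\<forall>A. A \<subseteq> V - Fb \<longrightarrow> card A \<le> D \<longrightarrow> base.GS V t E s D Fb (Fb \<union> A) {}"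
    using base.initial[OF bs big] by blast
  have finFb: "finite Fb" using Fb(1) finV finite_subset by metis
  have "card (V - Fb) \<ge> D"
  proof -
    have "card V \<le> card (V - Fb) + card Fb" by (rule cardle[OF finV finFb])
    moreover have "s \<le> (4*D+1)*s" by simp
    ultimately show ?thesis using big Fb(2) by linarith
  qed
  then obtain A where A: "A \<subseteq> V - Fb" "card A = D" by (meson obtain_subset_with_card_n)
  have finA: "finite A" using A(1) finV finite_subset by (metis Diff_subset subset_trans)
  obtain ph where ph: "bij_betw ph B A" using finite_same_card_bij[OF finB finA] B(2) A(2) by metis
  have phinj: "inj_on ph B" and phB: "ph ` B = A" using ph by (auto simp: bij_betw_def)
  have GS0: "base.GS V t E s D Fb (Fb \<union> ph ` B) {}" using GSA A phB by simp
  have pf: "s \<le> (D-1)^d" "d \<ge> 1 \<Longrightarrow> (D-1)^(d-1) < s"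
    using pow_facts[OF assms(1) assms(3) d_def] by auto
  have Tb: "base.T D d \<le> (D+1)*(s-1)"
    using base.T_bound[OF bs, of d] pf(2) by (cases "d = 0") auto
  have budget: "card VH + (s - 1) + 2 * base.T D d + (2*D-1)*s \<le> card V"
    using arith_budget[OF assms(1) assms(3)] Tb cV by linarith
  have pVH: "set (P a b) \<subseteq> VH" if "a \<in> B" "b \<in> B" "a \<noteq> b" for a b
    using that VHe by blast
  have pcol: "c {P a b ! k, P a b ! Suc k} \<in> {1..t}"
    if "a \<in> B" "b \<in> B" "a \<noteq> b" "Suc k < length (P a b)" for a b k
  proof -
    have "{P a b ! k, P a b ! Suc k} \<in> path_edges (P a b)" using that(4) by (auto simp: path_edges_def)
    then have "{P a b ! k, P a b ! Suc k} \<in> EH" using EHe that(1-3) by blast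
    then show ?thesis using ccol by blast
  qed
  have paths': "P b a = rev (P a b) \<and> P a b \<noteq> [] \<and> hd (P a b) = a \<and> last (P a b) = b \<and>
            distinct (P a b) \<and> length (P a b) \<ge> 2*d + 4 \<and> (set (P a b) - {a, b}) \<inter> B = {}"
    if "a \<in> B" "b \<in> B" "a \<noteq> b" for a b
  proof -
    have "P b a = rev (P a b) \<and> P a b \<noteq> [] \<and> hd (P a b) = a \<and> last (P a b) = b \<and>
            distinct (P a b) \<and> length (P a b) \<ge> (2 * d + 3) + 1 \<and>
            (set (P a b) - {a, b}) \<inter> B = {}" using pp that by blast
    then show ?thesis by simp
  qed
  have pdisj': "(set (P a b) - {a, b}) \<inter> (set (P a' b') - {a', b'}) = {}"
    if "a \<in> B" "b \<in> B" "a' \<in> B" "b' \<in> B" "a \<noteq> b" "a' \<noteq> b'" "{a, b} \<noteq> {a', b'}" for a b a' b'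
    using pd that by blast
  have phVV: "ph ` B \<subseteq> V - Fb" using phB A(1) by simp
  have em: "emb V t E s D Fb B P c ph d VH"
    apply (rule emb.intro[OF bs])
    apply (rule emb_axioms.intro)
    apply (rule GS0)
    apply (rule phinj)
    apply (rule phVV)
    apply (rule Fb(2))
    apply (rule finB)
    apply (rule B(2))
    apply (rule B(1))
    apply (rule finVH)
    apply (erule (2) paths')
    apply (erule (6) pdisj')
    apply (erule (2) pVH)
    apply (erule (3) pcol)
    apply (rule pf(1))
    apply (rule budget)
    done
  obtain phi where "inj_on phi VH" "phi ` VH \<subseteq> V" "\<forall>e\<in>EH. phi ` e \<in> E (c e)"
    using emb.embed[OF em VHe EHe] by blast
  then show ?thesis unfolding family_contains_def by blast
qed



end
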